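(* Let $G$ be a finite abelian group, $k\ge1$, $\Gamma=G\wr\mathbb{Z}^k=\Sigma\rtimes_\alpha\mathbb{Z}^k$, and let $\varphi$ be an automorphism of $\Gamma$ of finite order with $R(\varphi)<\infty$. Let $\pi:\Gamma\to\mathbb{Z}^k$ be the natural projection with kernel $\Sigma$ and $\overline{\varphi}$ the automorphism of $\mathbb{Z}^k$ induced by $\varphi$. Then for every $g\in\Gamma$ the Reidemeister class of $g$ with respect to $\varphi$ equals $\pi^{-1}(\{\pi(g)\}_{\overline{\varphi}})$, where $\{z\}_{\overline{\varphi}}$ is the Reidemeister class of $z$ with respect to $\overline{\varphi}$. In particular $R(\varphi)=R(\overline{\varphi})$, and $R(\tau_z\circ\varphi|_\Sigma)=1$ for every $z\in\mathbb{Z}^k$.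
   Context: Reidemeister classes of an endomorphism $\psi$ of a group $H$: classes of $x\sim gx\psi(g^{-1})$, $g\in H$; $R(\psi)$ is their number. $\Sigma=\bigoplus_{x\in\mathbb{Z}^k}G_x$, $G_x\cong G$, $\alpha(x)(g_y)=g_{x+y}$. For $z\in\mathbb{Z}^k$, $\tau_z:\Sigma\to\Sigma$ is conjugation by $z$, i.e. $\tau_z=\alpha(z)$. *)

theory Defs
  imports "HOL-Analysis.Analysis" "HOL-Algebra.Group" "HOL-Library.Extended_Nat"
begin

definition reid_class :: "('a,'b) monoid_scheme \<Rightarrow> ('a \<Rightarrow> 'a) \<Rightarrow> 'a \<Rightarrow> 'a set" where
  "reid_class H psi x = {g \<otimes>\<^bsub>H\<^esub> x \<otimes>\<^bsub>H\<^esub> psi (inv\<^bsub>H\<^esub> g) | g. g \<in> carrier H}"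

definition reid_classes :: "('a,'b) monoid_scheme \<Rightarrow> ('a \<Rightarrow> 'a) \<Rightarrow> 'a set set" where
  "reid_classes H psi = reid_class H psi ` carrier H"

definition reid_number :: "('a,'b) monoid_scheme \<Rightarrow> ('a \<Rightarrow> 'a) \<Rightarrow> enat" where
  "reid_number H psi = (if finite (reid_classes H psi) then enat (card (reid_classes H psi)) else \<infinity>)"

text \<open>The group Z^k, with k = CARD('n).\<close>

definition Zk :: "(int ^ 'n::finite) monoid" where
  "Zk = \<lparr>carrier = UNIV, mult = (+), one = 0\<rparr>"

text \<open>Sigma = direct sum of copies of G indexed by Z^k (finitely supported functions).\<close>

definition lamp_sum :: "('g,'b) monoid_scheme \<Rightarrow> ((int ^ 'n::finite) \<Rightarrow> 'g) monoid" where
  "lamp_sum G = \<lparr>carrier = {s. (\<forall>x. s x \<in> carrier G) \<and> finite {x. s x \<noteq> \<one>\<^bsub>G\<^esub>}},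
                 mult = (\<lambda>s t x. s x \<otimes>\<^bsub>G\<^esub> t x),
                 one = (\<lambda>x. \<one>\<^bsub>G\<^esub>)\<rparr>"

text \<open>alpha(z): (alpha(z) s)(x) = s(x - z), i.e. g_y goes to g_{z+y}.\<close>

definition shift :: "int ^ 'n::finite \<Rightarrow> ((int ^ 'n) \<Rightarrow> 'g) \<Rightarrow> ((int ^ 'n) \<Rightarrow> 'g)" where
  "shift z s = (\<lambda>x. s (x - z))"

definition wreath :: "('g,'b) monoid_scheme \<Rightarrow> (((int ^ 'n::finite) \<Rightarrow> 'g) \<times> (int ^ 'n)) monoid" where
  "wreath G = \<lparr>carrier = carrier (lamp_sum G) \<times> UNIV,
               mult = (\<lambda>(s, z) (t, w). ((\<lambda>x. s x \<otimes>\<^bsub>G\<^esub> shift z t x), z + w)),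
               one = ((\<lambda>x. \<one>\<^bsub>G\<^esub>), 0)\<rparr>"

definition proj :: "(((int ^ 'n::finite) \<Rightarrow> 'g) \<times> (int ^ 'n)) \<Rightarrow> int ^ 'n" where
  "proj g = snd g"

text \<open>Induced automorphism of Z^k: phibar(pi g) = pi(phi g), computed on the section z |-> (1,z).\<close>

definition induced :: "('g,'b) monoid_scheme \<Rightarrow> ((((int ^ 'n::finite) \<Rightarrow> 'g) \<times> (int ^ 'n)) \<Rightarrow> (((int ^ 'n) \<Rightarrow> 'g) \<times> (int ^ 'n)))
     \<Rightarrow> int ^ 'n \<Rightarrow> int ^ 'n" where
  "induced G phi z = proj (phi ((\<lambda>x. \<one>\<^bsub>G\<^esub>), z))"

definition restr_Sigma :: "((((int ^ 'n::finite) \<Rightarrow> 'g) \<times> (int ^ 'n)) \<Rightarrow> (((int ^ 'n) \<Rightarrow> 'g) \<times> (int ^ 'n)))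
     \<Rightarrow> ((int ^ 'n) \<Rightarrow> 'g) \<Rightarrow> ((int ^ 'n) \<Rightarrow> 'g)" where
  "restr_Sigma phi s = fst (phi (s, 0))"

end

theory Submission
  imports Defs "HOL-Algebra.Multiplicative_Group"
begin


definition supp :: "('g,'b) monoid_scheme \<Rightarrow> ('x \<Rightarrow> 'g) \<Rightarrow> 'x set" where
  "supp G s = {x. s x \<noteq> \<one>\<^bsub>G\<^esub>}"

lemma lamp_carrier: "s \<in> carrier (lamp_sum G) \<longleftrightarrow> (\<forall>x. s x \<in> carrier G) \<and> finite (supp G s)"
  by (simp add: lamp_sum_def supp_def)
lemma lamp_mult[simp]: "s \<otimes>\<^bsub>lamp_sum G\<^esub> t = (\<lambda>x. s x \<otimes>\<^bsub>G\<^esub> t x)"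
  by (simp add: lamp_sum_def)
lemma lamp_one[simp]: "\<one>\<^bsub>lamp_sum G\<^esub> = (\<lambda>x. \<one>\<^bsub>G\<^esub>)"
  by (simp add: lamp_sum_def)
lemma wreath_carrier: "carrier (wreath G) = carrier (lamp_sum G) \<times> UNIV"
  by (simp add: wreath_def)
lemma wreath_mult[simp]: "(s,z) \<otimes>\<^bsub>wreath G\<^esub> (t,w) = ((\<lambda>x. s x \<otimes>\<^bsub>G\<^esub> t (x - z)), z + w)"
  by (simp add: wreath_def shift_def)
lemma wreath_one[simp]: "\<one>\<^bsub>wreath G\<^esub> = ((\<lambda>x. \<one>\<^bsub>G\<^esub>), 0)"
  by (simp add: wreath_def)
lemma shift_apply[simp]: "shift z s x = s (x - z)"
  by (simp add: shift_def)

locale wr = comm_group G for G (structure) +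
  fixes nty :: "'n::finite itself"
begin

abbreviation "LS \<equiv> (lamp_sum G :: ((int^'n) \<Rightarrow> _) monoid)"
abbreviation "WR \<equiv> (wreath G :: (((int^'n) \<Rightarrow> _) \<times> (int^'n)) monoid)"


lemma supp_mult: "supp G (\<lambda>x. s x \<otimes> t x) \<subseteq> supp G s \<union> supp G t"
  by (auto simp: supp_def)

lemma supp_shift: "supp G (\<lambda>x. t (x - z)) = (\<lambda>y. y + z) ` supp G (t :: int^'n \<Rightarrow> _)"
  by (auto simp: supp_def image_iff) (metis diff_add_cancel)

lemma supp_inv: "\<forall>x. s x \<in> carrier G \<Longrightarrow> supp G (\<lambda>x. inv (s x)) = supp G s"
  by (auto simp: supp_def)

lemma lamp_comm_group: "comm_group (LS)"
proof (rule comm_groupI)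
  fix x y assume "x \<in> carrier (LS)" "y \<in> carrier (LS)"
  then show "x \<otimes>\<^bsub>LS\<^esub> y \<in> carrier (LS)"
    using supp_mult[of x y] by (auto simp: lamp_carrier intro: finite_subset)
next
  show "\<one>\<^bsub>LS\<^esub> \<in> carrier (LS)" by (simp add: lamp_carrier supp_def)
next
  fix x y z assume "x \<in> carrier (LS)" "y \<in> carrier (LS)" "z \<in> carrier (LS)"
  then show "x \<otimes>\<^bsub>LS\<^esub> y \<otimes>\<^bsub>LS\<^esub> z = x \<otimes>\<^bsub>LS\<^esub> (y \<otimes>\<^bsub>LS\<^esub> z)"
    by (auto simp: lamp_carrier m_assoc)
next
  fix x y assume "x \<in> carrier (LS)" "y \<in> carrier (LS)"
  then show "x \<otimes>\<^bsub>LS\<^esub> y = y \<otimes>\<^bsub>LS\<^esub> x"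
    by (auto simp: lamp_carrier m_comm)
next
  fix x assume "x \<in> carrier (LS)"
  then show "\<one>\<^bsub>LS\<^esub> \<otimes>\<^bsub>LS\<^esub> x = x" by (auto simp: lamp_carrier)
next
  fix x assume x: "x \<in> carrier (LS)"
  then have "(\<lambda>y. inv (x y)) \<in> carrier (LS)" using supp_inv[of x] by (auto simp: lamp_carrier)
  moreover have "(\<lambda>y. inv (x y)) \<otimes>\<^bsub>LS\<^esub> x = \<one>\<^bsub>LS\<^esub>" using x by (auto simp: lamp_carrier)
  ultimately show "\<exists>y\<in>carrier (LS). y \<otimes>\<^bsub>LS\<^esub> x = \<one>\<^bsub>LS\<^esub>" by blast
qed

lemma lamp_inv: "s \<in> carrier (LS) \<Longrightarrow> inv\<^bsub>LS\<^esub> s = (\<lambda>x. inv (s x))"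
proof -
  assume s: "s \<in> carrier (LS)"
  interpret L: comm_group "LS" by (rule lamp_comm_group)
  have "(\<lambda>y. inv (s y)) \<in> carrier (LS)" using s supp_inv[of s] by (auto simp: lamp_carrier)
  moreover have "(\<lambda>y. inv (s y)) \<otimes>\<^bsub>LS\<^esub> s = \<one>\<^bsub>LS\<^esub>" using s by (auto simp: lamp_carrier)
  ultimately show ?thesis using s L.inv_equality by blast
qed

lemma wreath_closed: "(s,z) \<in> carrier (WR) \<Longrightarrow> (t,w) \<in> carrier (WR) \<Longrightarrow>
   ((\<lambda>x. s x \<otimes> t (x - z)), z + w) \<in> carrier (WR)"
  using supp_mult[of s "\<lambda>x. t (x - z)"] supp_shift[of t z]
  by (auto simp: wreath_carrier lamp_carrier intro: finite_subset)

lemma wreath_group: "group (WR)"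
proof (rule groupI)
  fix x y assume "x \<in> carrier (WR)" "y \<in> carrier (WR)"
  then show "x \<otimes>\<^bsub>WR\<^esub> y \<in> carrier (WR)"
    using wreath_closed by (cases x, cases y) auto
next
  show "\<one>\<^bsub>WR\<^esub> \<in> carrier (WR)" by (simp add: wreath_carrier lamp_carrier supp_def)
next
  fix x y z assume "x \<in> carrier (WR)" "y \<in> carrier (WR)" "z \<in> carrier (WR)"
  then show "x \<otimes>\<^bsub>WR\<^esub> y \<otimes>\<^bsub>WR\<^esub> z = x \<otimes>\<^bsub>WR\<^esub> (y \<otimes>\<^bsub>WR\<^esub> z)"
    by (cases x, cases y, cases z) (auto simp: wreath_carrier lamp_carrier m_assoc diff_diff_eq add.assoc)
next
  fix x assume "x \<in> carrier (WR)"
  then show "\<one>\<^bsub>WR\<^esub> \<otimes>\<^bsub>WR\<^esub> x = x" by (cases x) (auto simp: wreath_carrier lamp_carrier)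
next
  fix x assume x: "x \<in> carrier (WR)"
  obtain s z where xz: "x = (s,z)" by (cases x)
  have "((\<lambda>y. inv (s (y + z))), -z) \<in> carrier (WR)"
    using x xz supp_inv[of s] supp_shift[of "\<lambda>y. inv (s y)" "-z"]
    by (auto simp: wreath_carrier lamp_carrier)
  moreover have "((\<lambda>y. inv (s (y + z))), -z) \<otimes>\<^bsub>WR\<^esub> x = \<one>\<^bsub>WR\<^esub>"
    using x xz by (auto simp: wreath_carrier lamp_carrier)
  ultimately show "\<exists>y\<in>carrier (WR). y \<otimes>\<^bsub>WR\<^esub> x = \<one>\<^bsub>WR\<^esub>" by blast
qed

lemma wreath_inv: "(s,z) \<in> carrier (WR) \<Longrightarrow> inv\<^bsub>WR\<^esub> (s,z) = ((\<lambda>y. inv (s (y + z))), -z)"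
proof -
  assume x: "(s,z) \<in> carrier (WR)"
  interpret W: group "WR" by (rule wreath_group)
  have "((\<lambda>y. inv (s (y + z))), -z) \<in> carrier (WR)"
    using x supp_inv[of s] supp_shift[of "\<lambda>y. inv (s y)" "-z"]
    by (auto simp: wreath_carrier lamp_carrier)
  moreover have "((\<lambda>y. inv (s (y + z))), -z) \<otimes>\<^bsub>WR\<^esub> (s,z) = \<one>\<^bsub>WR\<^esub>"
    using x by (auto simp: wreath_carrier lamp_carrier)
  ultimately show ?thesis using x W.inv_equality by blast
qed

end


locale mt = wr G nty for G (structure) and nty :: "'n::finite itself" +
  fixes phi :: "((int^'n \<Rightarrow> 'a) \<times> (int^'n)) \<Rightarrow> ((int^'n \<Rightarrow> 'a) \<times> (int^'n))" and n :: nat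
  assumes finG: "finite (carrier G)"
    and phi_iso: "phi \<in> iso WR WR"
    and npos: "n > 0"
    and per: "\<forall>g \<in> carrier WR. (phi ^^ n) g = g"
begin

definition phiS :: "(int^'n \<Rightarrow> 'a) \<Rightarrow> (int^'n \<Rightarrow> 'a)" where
  "phiS s = fst (phi (s, 0))"
definition phib :: "int^'n \<Rightarrow> int^'n" where
  "phib z = snd (phi ((\<lambda>x. \<one>), z))"

lemma W_group: "group WR" by (rule wreath_group)

lemma phi_hom: "group_hom WR WR phi"
  using phi_iso W_group by (auto simp: iso_def group_hom_def group_hom_axioms_def)

lemma phi_bij: "bij_betw phi (carrier WR) (carrier WR)"
  using phi_iso by (auto simp: iso_def)

lemma phi_mult: "g \<in> carrier WR \<Longrightarrow> h \<in> carrier WR \<Longrightarrow> phi (g \<otimes>\<^bsub>WR\<^esub> h) = phi g \<otimes>\<^bsub>WR\<^esub> phi h"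
  using group_hom.hom_mult[OF phi_hom] by blast

lemma phi_carrier: "g \<in> carrier WR \<Longrightarrow> phi g \<in> carrier WR"
  using group_hom.hom_closed[OF phi_hom] by blast

lemma one_LS: "(\<lambda>x. \<one>) \<in> carrier LS"
  by (simp add: lamp_carrier supp_def)

lemma W_pow0: "s \<in> carrier LS \<Longrightarrow> (s, 0) [^]\<^bsub>WR\<^esub> (k::nat) = ((\<lambda>x. s x [^] k), 0)"
  by (induction k) (auto simp: lamp_carrier nat_pow_Suc2 m_comm)

lemma W_pow_snd: "g \<in> carrier WR \<Longrightarrow> snd (g [^]\<^bsub>WR\<^esub> (k::nat)) $ i = int k * snd g $ i"
proof (induction k)
  case 0 then show ?case by simp
next
  case (Suc k)
  obtain c d where cd: "g = (c, d)" by (cases g)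
  obtain a b where ab: "(c,d) [^]\<^bsub>WR\<^esub> k = (a, b)" by (cases "(c,d) [^]\<^bsub>WR\<^esub> k")
  show ?case using Suc ab unfolding cd by (simp add: algebra_simps)
qed

lemma phi_Sigma_snd: assumes s: "s \<in> carrier LS" shows "snd (phi (s, 0)) = 0"
proof -
  interpret W: group WR by (rule W_group)
  interpret H: group_hom WR WR phi by (rule phi_hom)
  have sW: "(s,0) \<in> carrier WR" using s by (simp add: wreath_carrier)
  define e where "e = order G"
  have epos: "e > 0" unfolding e_def using finG order_gt_0_iff_finite by blast
  have "(s,0) [^]\<^bsub>WR\<^esub> e = \<one>\<^bsub>WR\<^esub>"
    using s by (simp add: W_pow0 e_def pow_order_eq_1 lamp_carrier)
  then have "phi ((s,0) [^]\<^bsub>WR\<^esub> e) = \<one>\<^bsub>WR\<^esub>" using H.hom_one by simp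
  then have "phi (s,0) [^]\<^bsub>WR\<^esub> e = \<one>\<^bsub>WR\<^esub>" using H.hom_nat_pow sW by metis
  then have "snd (phi (s,0) [^]\<^bsub>WR\<^esub> e) = 0" by simp
  then have "\<And>i. int e * snd (phi (s,0)) $ i = 0"
    using W_pow_snd[OF H.hom_closed[OF sW], of e] by (metis zero_index)
  then show ?thesis using epos by (simp add: vec_eq_iff)
qed

lemma phi_Sigma: "s \<in> carrier LS \<Longrightarrow> phi (s, 0) = (phiS s, 0)"
  using phi_Sigma_snd[of s] unfolding phiS_def by (metis prod.collapse)

lemma phiS_carrier: "s \<in> carrier LS \<Longrightarrow> phiS s \<in> carrier LS"
  using phi_carrier[of "(s,0)"] phi_Sigma[of s] by (simp add: wreath_carrier)

lemma phiS_mult: assumes "s \<in> carrier LS" "t \<in> carrier LS"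
  shows "phiS (\<lambda>x. s x \<otimes> t x) = (\<lambda>x. phiS s x \<otimes> phiS t x)"
proof -
  have "(s,0) \<otimes>\<^bsub>WR\<^esub> (t,0) = ((\<lambda>x. s x \<otimes> t x), 0)" by simp
  then have "phi ((\<lambda>x. s x \<otimes> t x), 0) = phi (s,0) \<otimes>\<^bsub>WR\<^esub> phi (t,0)"
    using phi_mult[of "(s,0)" "(t,0)"] assms by (simp add: wreath_carrier)
  also have "\<dots> = ((\<lambda>x. phiS s x \<otimes> phiS t x), 0)"
    using assms phiS_carrier by (simp add: phi_Sigma lamp_carrier)
  finally show ?thesis unfolding phiS_def[of "(\<lambda>x. s x \<otimes> t x)"] by (simp only: fst_conv)
qed

lemma unit_W: "((\<lambda>x. \<one>), z) \<in> carrier WR"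
  using one_LS by (simp add: wreath_carrier)

lemma phi_unit: "phi ((\<lambda>x. \<one>), z) = (fst (phi ((\<lambda>x. \<one>), z)), phib z)"
  unfolding phib_def by simp

lemma fst_phi_unit_carrier: "fst (phi ((\<lambda>x. \<one>), z)) \<in> carrier LS"
  using phi_carrier[OF unit_W[of z]] by (cases "phi ((\<lambda>x. \<one>), z)") (simp add: wreath_carrier)

lemma snd_phi: assumes "s \<in> carrier LS" shows "snd (phi (s, z)) = phib z"
proof -
  have "(s, z) = (s,0) \<otimes>\<^bsub>WR\<^esub> ((\<lambda>x. \<one>), z)" using assms by (simp add: lamp_carrier)
  then have "phi (s,z) = (phiS s, 0) \<otimes>\<^bsub>WR\<^esub> phi ((\<lambda>x. \<one>), z)"
    using phi_mult[of "(s,0)" "((\<lambda>x. \<one>), z)"] assms unit_W phi_Sigma by (simp add: wreath_carrier)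
  then show ?thesis by (subst (asm) phi_unit) simp
qed

lemma snd_W_mult: "snd (g \<otimes>\<^bsub>WR\<^esub> h) = snd g + snd h"
  by (cases g, cases h) simp

lemma phib_add: "phib (z + w) = phib z + phib w"
proof -
  have "((\<lambda>x. \<one>), z + w) = ((\<lambda>x. \<one>), z) \<otimes>\<^bsub>WR\<^esub> ((\<lambda>x. \<one>), w)" by simp
  then have "phi ((\<lambda>x. \<one>), z + w) = phi ((\<lambda>x. \<one>), z) \<otimes>\<^bsub>WR\<^esub> phi ((\<lambda>x. \<one>), w)"
    using phi_mult unit_W by metis
  then show ?thesis unfolding phib_def by (simp only: snd_W_mult)
qed

lemma phib_0: "phib 0 = 0"
  using phib_add[of 0 0] by simp

lemma phib_minus: "phib (- z) = - phib z"
proof (rule add.inverse_unique[symmetric])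
  show "phib z + phib (- z) = 0" using phib_add[of z "-z"] phib_0 by simp
qed

lemma phib_diff: "phib (z - w) = phib z - phib w"
  using phib_add[of z "-w"] phib_minus by simp

end


context mt begin

lemma phi_inv: "g \<in> carrier WR \<Longrightarrow> phi (inv\<^bsub>WR\<^esub> g) = inv\<^bsub>WR\<^esub> (phi g)"
  using group_hom.hom_inv[OF phi_hom] by blast

lemma phiS_shift: assumes s: "s \<in> carrier LS"
  shows "phiS (shift w s) = shift (phib w) (phiS s)"
proof -
  interpret W: group WR by (rule W_group)
  obtain c where c: "phi ((\<lambda>x. \<one>), w) = (c, phib w)" using phi_unit by blast
  have cL: "c \<in> carrier LS" using fst_phi_unit_carrier[of w] c by simp
  have inv1: "inv\<^bsub>WR\<^esub> ((\<lambda>x. \<one>), w) = ((\<lambda>x. \<one>), -w)"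
    using wreath_inv[OF unit_W[of w]] by simp
  have eq: "((\<lambda>x. \<one>), w) \<otimes>\<^bsub>WR\<^esub> (s, 0) \<otimes>\<^bsub>WR\<^esub> ((\<lambda>x. \<one>), -w) = (shift w s, 0)"
    using s by (simp add: lamp_carrier shift_def)
  have sW: "(s,0) \<in> carrier WR" using s by (simp add: wreath_carrier)
  have "phi (shift w s, 0) = phi ((\<lambda>x. \<one>), w) \<otimes>\<^bsub>WR\<^esub> phi (s, 0) \<otimes>\<^bsub>WR\<^esub> phi (inv\<^bsub>WR\<^esub> ((\<lambda>x. \<one>), w))"
    using eq[symmetric] inv1 phi_mult unit_W sW W.m_closed by metis
  also have "\<dots> = (c, phib w) \<otimes>\<^bsub>WR\<^esub> (phiS s, 0) \<otimes>\<^bsub>WR\<^esub> inv\<^bsub>WR\<^esub> (c, phib w)"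
    using phi_inv[OF unit_W[of w]] c phi_Sigma[OF s] by simp
  also have "\<dots> = (shift (phib w) (phiS s), 0)"
    using wreath_inv[of c "phib w"] cL phiS_carrier[OF s]
    by (simp add: wreath_carrier lamp_carrier m_assoc m_lcomm[of "c _"] shift_def)
  finally show ?thesis unfolding phiS_def by simp
qed

lemma snd_phi': "g \<in> carrier WR \<Longrightarrow> snd (phi g) = phib (snd g)"
  by (cases g) (simp add: wreath_carrier snd_phi)

lemma phi_pow_carrier: "g \<in> carrier WR \<Longrightarrow> (phi ^^ j) g \<in> carrier WR"
  by (induction j) (auto simp: phi_carrier)

lemma phi_pow_snd: "g \<in> carrier WR \<Longrightarrow> snd ((phi ^^ j) g) = (phib ^^ j) (snd g)"
  by (induction j) (auto simp: snd_phi' phi_pow_carrier)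

lemma phiS_pow_carrier: "s \<in> carrier LS \<Longrightarrow> (phiS ^^ j) s \<in> carrier LS"
  by (induction j) (auto simp: phiS_carrier)

lemma phi_pow_Sigma: "s \<in> carrier LS \<Longrightarrow> (phi ^^ j) (s, 0) = ((phiS ^^ j) s, 0)"
  by (induction j) (auto simp: phi_Sigma phiS_pow_carrier)

lemma phib_per: "(phib ^^ n) z = z"
  using phi_pow_snd[OF unit_W[of z], of n] per unit_W[of z] by simp

lemma phiS_per: "s \<in> carrier LS \<Longrightarrow> (phiS ^^ n) s = s"
  using phi_pow_Sigma[of s n] per by (simp add: wreath_carrier)

lemma phib_pow_Suc: "phib ((phib ^^ j) z) = (phib ^^ Suc j) z"
  by simp

lemma phib_inj: "inj phib"
proof (rule injI)
  fix x y assume "phib x = phib y"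
  then have "(phib ^^ (n - 1)) (phib x) = (phib ^^ (n - 1)) (phib y)" by simp
  moreover have "\<And>u. (phib ^^ (n - 1)) (phib u) = (phib ^^ n) u"
  proof -
    fix u
    have n: "n = Suc (n - 1)" using npos by simp
    show "(phib ^^ (n - 1)) (phib u) = (phib ^^ n) u"
      by (subst (2) n) (simp only: funpow_Suc_right o_apply)
  qed
  ultimately show "x = y" using phib_per[of x] phib_per[of y] by simp
qed

lemma phib_surj: "surj phib"
proof -
  have "\<And>z. phib ((phib ^^ (n - 1)) z) = z"
  proof -
    fix z
    have n: "n = Suc (n - 1)" using npos by simp
    have "phib ((phib ^^ (n - 1)) z) = (phib ^^ n) z"
      by (subst (2) n) (simp only: funpow.simps(2) o_apply)
    then show "phib ((phib ^^ (n - 1)) z) = z" using phib_per by simp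
  qed
  then show ?thesis by (rule surjI)
qed

lemma phib_smult: "phib (of_nat c *s v) = of_nat c *s phib v"
proof (induction c)
  case 0 then show ?case using phib_0 by simp
next
  case (Suc c)
  have "of_nat (Suc c) *s v = of_nat c *s v + v" by (simp add: vector_sadd_rdistrib)
  then show ?case using Suc by (simp add: phib_add vector_sadd_rdistrib)
qed

lemma phib_pow_add: "(phib ^^ j) (z + w) = (phib ^^ j) z + (phib ^^ j) w"
  by (induction j) (auto simp: phib_add)

lemma phib_pow_smult: "(phib ^^ j) (of_nat c *s v) = of_nat c *s (phib ^^ j) v"
  by (induction j) (auto simp: phib_smult)

lemma phib_pow_mod: "(phib ^^ (j mod n)) z = (phib ^^ j) z"
proof -
  have "(phib ^^ (n * q + r)) z = (phib ^^ r) z" for q r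
  proof (induction q)
    case 0 then show ?case by simp
  next
    case (Suc q)
    have "n * Suc q + r = n + (n * q + r)" by simp
    then show ?case using Suc by (simp only: funpow_add o_apply phib_per)
  qed
  from this[of "j div n" "j mod n"] show ?thesis by simp
qed

lemma phiS_shift_pow: "s \<in> carrier LS \<Longrightarrow> (phiS ^^ j) (shift w s) = shift ((phib ^^ j) w) ((phiS ^^ j) s)"
  by (induction j) (auto simp: phiS_shift phiS_pow_carrier)

end


lemma Zk_carrier[simp]: "carrier (Zk :: (int^'n::finite) monoid) = UNIV" by (simp add: Zk_def)
lemma Zk_mult[simp]: "x \<otimes>\<^bsub>(Zk :: (int^'n::finite) monoid)\<^esub> y = x + y" by (simp add: Zk_def)
lemma Zk_one[simp]: "\<one>\<^bsub>(Zk :: (int^'n::finite) monoid)\<^esub> = 0" by (simp add: Zk_def)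
lemma Zk_group: "group (Zk :: (int^'n::finite) monoid)"
  by (rule groupI) (auto simp: add.assoc intro: exI[of _ "- _"])
lemma Zk_inv[simp]: "inv\<^bsub>(Zk :: (int^'n::finite) monoid)\<^esub> x = - x"
  by (rule group.inv_equality[OF Zk_group]) simp_all

lemma reid_class_Zk: "reid_class (Zk :: (int^'n::finite) monoid) f x = {g + x + f (- g) | g. True}"
  by (simp add: reid_class_def)

context mt begin

lemma induced_eq: "induced G phi = phib"
  by (rule ext) (simp add: induced_def phib_def proj_def)

lemma restr_eq: "restr_Sigma phi = phiS"
  by (rule ext) (simp add: restr_Sigma_def phiS_def)

lemma W_inv_snd: "g \<in> carrier WR \<Longrightarrow> snd (inv\<^bsub>WR\<^esub> g) = - snd g"
  by (cases g) (simp add: wreath_inv)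

lemma inv_closed_W: "g \<in> carrier WR \<Longrightarrow> inv\<^bsub>WR\<^esub> g \<in> carrier WR"
  using group.inv_closed[OF W_group] by blast

lemma mult_closed_W: "g \<in> carrier WR \<Longrightarrow> h \<in> carrier WR \<Longrightarrow> g \<otimes>\<^bsub>WR\<^esub> h \<in> carrier WR"
  by (meson W_group group.is_monoid monoid.m_closed)

lemma proj_reid_class: assumes g: "g \<in> carrier WR"
  shows "proj ` reid_class WR phi g = reid_class (Zk :: (int^'n) monoid) phib (proj g)"
proof
  show "proj ` reid_class WR phi g \<subseteq> reid_class Zk phib (proj g)"
  proof
    fix y assume "y \<in> proj ` reid_class WR phi g"
    then obtain h where h: "h \<in> carrier WR" and y: "y = proj (h \<otimes>\<^bsub>WR\<^esub> g \<otimes>\<^bsub>WR\<^esub> phi (inv\<^bsub>WR\<^esub> h))"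
      unfolding reid_class_def by auto
    have "y = snd h + snd g + phib (- snd h)"
      using y h g by (simp add: proj_def snd_W_mult snd_phi' inv_closed_W W_inv_snd)
    then show "y \<in> reid_class Zk phib (proj g)" by (auto simp: reid_class_Zk proj_def)
  qed
next
  show "reid_class Zk phib (proj g) \<subseteq> proj ` reid_class WR phi g"
  proof
    fix y assume "y \<in> reid_class (Zk :: (int^'n) monoid) phib (proj g)"
    then obtain w where y: "y = w + snd g + phib (- w)" by (auto simp: reid_class_Zk proj_def)
    let ?h = "((\<lambda>x. \<one>), w)"
    have "proj (?h \<otimes>\<^bsub>WR\<^esub> g \<otimes>\<^bsub>WR\<^esub> phi (inv\<^bsub>WR\<^esub> ?h)) = y"
      using y unit_W[of w] g by (simp add: proj_def snd_W_mult snd_phi' inv_closed_W W_inv_snd)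
    moreover have "?h \<otimes>\<^bsub>WR\<^esub> g \<otimes>\<^bsub>WR\<^esub> phi (inv\<^bsub>WR\<^esub> ?h) \<in> reid_class WR phi g"
      unfolding reid_class_def using unit_W[of w] by blast
    ultimately show "y \<in> proj ` reid_class WR phi g" by (blast intro: image_eqI[OF sym])
  qed
qed

lemma proj_surj: "proj ` carrier WR = UNIV"
proof -
  have "\<And>z. z = proj ((\<lambda>x. \<one>), z)" by (simp add: proj_def)
  then show ?thesis using unit_W by blast
qed

lemma reid_classes_Zk: "reid_classes (Zk :: (int^'n) monoid) phib = (\<lambda>c. proj ` c) ` reid_classes WR phi"
proof -
  have "reid_classes (Zk :: (int^'n) monoid) phib = (\<lambda>g. reid_class (Zk :: (int^'n) monoid) phib (proj g)) ` carrier WR"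
  proof -
    have "reid_classes (Zk :: (int^'n) monoid) phib = reid_class (Zk :: (int^'n) monoid) phib ` (proj ` carrier WR)"
      unfolding reid_classes_def proj_surj by simp
    then show ?thesis by (simp only: image_image)
  qed
  also have "\<dots> = (\<lambda>c. proj ` c) ` reid_classes WR phi"
    unfolding reid_classes_def by (simp add: image_image proj_reid_class)
  finally show ?thesis .
qed

definition Nsum :: "int^'n \<Rightarrow> int^'n" where
  "Nsum z = (\<Sum>j<n. (phib ^^ j) z)"

lemma Nsum_phib: "Nsum (phib z) = Nsum z"
proof -
  have "Nsum (phib z) = (\<Sum>j<n. (phib ^^ Suc j) z)" unfolding Nsum_def
    by (simp only: funpow_Suc_right o_apply)
  also have "\<dots> = (\<Sum>j<Suc n. (phib ^^ j) z) - (phib ^^ 0) z"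
    by (simp only: sum.lessThan_Suc_shift) simp
  also have "\<dots> = Nsum z" by (simp add: Nsum_def phib_per)
  finally show ?thesis .
qed

lemma Nsum_add: "Nsum (z + w) = Nsum z + Nsum w"
  by (simp add: Nsum_def phib_pow_add sum.distrib)

lemma phib_pow_0: "(phib ^^ j) 0 = 0"
  by (induction j) (simp_all add: phib_0)

lemma Nsum_minus: "Nsum (- z) = - Nsum z"
proof (rule add.inverse_unique[symmetric])
  show "Nsum z + Nsum (- z) = 0" using Nsum_add[of z "-z"] by (simp add: Nsum_def phib_pow_0)
qed

lemma Nsum_diff: "Nsum (z - w) = Nsum z - Nsum w"
  using Nsum_add[of z "-w"] Nsum_minus[of w] by simp

lemma Nsum_class: "y \<in> reid_class (Zk :: (int^'n) monoid) phib x \<Longrightarrow> Nsum y = Nsum x"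
  by (auto simp: reid_class_Zk Nsum_add phib_minus Nsum_diff Nsum_phib)

lemma phib_sum: "phib (\<Sum>j<(m::nat). f j) = (\<Sum>j<m. phib (f j))"
  by (induction m) (simp_all add: phib_add phib_0)

end

locale mtR = mt G nty phi n for G (structure) and nty :: "'n::finite itself" and phi n +
  assumes finR: "finite (reid_classes WR phi)"
begin

lemma finR_Zk: "finite (reid_classes Zk phib)"
  using finR reid_classes_Zk by simp

lemma phib_fix: assumes v: "phib v = v" shows "v = 0"
proof (rule ccontr)
  assume v0: "v \<noteq> 0"
  have pv: "(phib ^^ j) v = v" for j by (induction j) (simp_all add: v)
  have sc: "(\<Sum>j<m. x) = of_nat m *s x" for m and x :: "int^'n"
    by (simp add: vec_eq_iff of_nat_index)
  have N: "Nsum (of_nat c *s v) = of_nat (n * c) *s v" for c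
  proof -
    have "Nsum (of_nat c *s v) = (\<Sum>j<n. of_nat c *s v)"
      unfolding Nsum_def phib_pow_smult pv by simp
    also have "\<dots> = of_nat n *s (of_nat c *s v)" by (rule sc)
    also have "\<dots> = of_nat (n * c) *s v" by (simp add: vector_smult_assoc)
    finally show ?thesis .
  qed
  let ?f = "\<lambda>c. reid_class Zk phib (of_nat c *s v)"
  have mem: "x \<in> reid_class Zk phib x" for x
  proof -
    have "x = 0 + x + phib (- 0)" by (simp add: phib_0)
    then show ?thesis unfolding reid_class_Zk by blast
  qed
  have "inj ?f"
  proof (rule injI)
    fix c d assume "?f c = ?f d"
    then have "of_nat c *s v \<in> ?f d" using mem[of "of_nat c *s v"] by simp
    then have "Nsum (of_nat c *s v) = Nsum (of_nat d *s v)" by (rule Nsum_class)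
    then have "of_nat (n * c) *s v = of_nat (n * d) *s v" by (simp add: N)
    then have "(int (n * c) - int (n * d)) *s v = 0" by (simp add: vector_sub_rdistrib)
    then have "int (n * c) - int (n * d) = 0 \<or> v = 0" by (simp only: vector_mul_eq_0)
    then have "int (n * c) = int (n * d)" using v0 by simp
    then show "c = d" using npos by simp
  qed
  moreover have "range ?f \<subseteq> reid_classes Zk phib"
    by (auto simp: reid_classes_def)
  ultimately have "finite (range ?f)" using finR_Zk by (meson finite_subset)
  then have "finite (UNIV :: nat set)" using \<open>inj ?f\<close> by (rule finite_imageD)
  then show False by simp
qed


lemma Nsum_zero: "Nsum z = 0"
proof (rule phib_fix)
  have "phib (Nsum z) = Nsum (phib z)"
    unfolding Nsum_def phib_sum by (simp add: funpow_swap1)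
  then show "phib (Nsum z) = Nsum z" using Nsum_phib by simp
qed

end


context mt begin

lemma shift_LS: "s \<in> carrier LS \<Longrightarrow> shift z s \<in> carrier LS"
  using supp_shift[of s z] by (simp add: lamp_carrier shift_def)

lemma shift_shift: "shift a (shift b s) = shift (a + b) s"
  by (simp add: shift_def diff_diff_eq add.commute)

lemma phiS_one: "phiS (\<lambda>x. \<one>) = (\<lambda>x. \<one>)"
proof -
  have "phi ((\<lambda>x. \<one>), 0) = ((\<lambda>x. \<one>), 0)"
    using group_hom.hom_one[OF phi_hom] by simp
  then show ?thesis by (simp add: phiS_def)
qed

lemma phiS_inv: assumes s: "s \<in> carrier LS" shows "phiS (\<lambda>x. inv (s x)) = (\<lambda>x. inv (phiS s x))"
proof -
  have si: "(\<lambda>x. inv (s x)) \<in> carrier LS" using s supp_inv[of s] by (simp add: lamp_carrier)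
  have "(\<lambda>x. phiS (\<lambda>x. inv (s x)) x \<otimes> phiS s x) = phiS (\<lambda>x. inv (s x) \<otimes> s x)"
    using phiS_mult[OF si s] by simp
  also have "\<dots> = (\<lambda>x. \<one>)" using s phiS_one by (simp add: lamp_carrier)
  finally have eq: "\<And>x. phiS (\<lambda>x. inv (s x)) x \<otimes> phiS s x = \<one>" by metis
  show ?thesis
  proof
    fix x
    have "phiS (\<lambda>x. inv (s x)) x \<in> carrier G" "phiS s x \<in> carrier G"
      using phiS_carrier[OF si] phiS_carrier[OF s] by (auto simp: lamp_carrier)
    then show "phiS (\<lambda>x. inv (s x)) x = inv (phiS s x)"
      using eq[of x] inv_equality by metis
  qed
qed

definition psi :: "int^'n \<Rightarrow> (int^'n \<Rightarrow> 'a) \<Rightarrow> (int^'n \<Rightarrow> 'a)" where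
  "psi z s = shift z (phiS s)"

lemma psi_carrier: "s \<in> carrier LS \<Longrightarrow> psi z s \<in> carrier LS"
  by (simp add: psi_def shift_LS phiS_carrier)

lemma psi_mult: "s \<in> carrier LS \<Longrightarrow> t \<in> carrier LS \<Longrightarrow>
    psi z (\<lambda>x. s x \<otimes> t x) = (\<lambda>x. psi z s x \<otimes> psi z t x)"
  by (simp add: psi_def phiS_mult shift_def)

lemma psi_inv: "s \<in> carrier LS \<Longrightarrow> psi z (\<lambda>x. inv (s x)) = (\<lambda>x. inv (psi z s x))"
  by (simp add: psi_def phiS_inv shift_def)

lemma psi_one: "psi z (\<lambda>x. \<one>) = (\<lambda>x. \<one>)"
  by (simp add: psi_def phiS_one shift_def)

lemma psi_pow_carrier: "s \<in> carrier LS \<Longrightarrow> (psi z ^^ j) s \<in> carrier LS"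
  by (induction j) (simp_all add: psi_carrier)

lemma psi_pow: "s \<in> carrier LS \<Longrightarrow> (psi z ^^ j) s = shift (\<Sum>i<j. (phib ^^ i) z) ((phiS ^^ j) s)"
proof (induction j)
  case 0 then show ?case by (simp add: shift_def)
next
  case (Suc j)
  have "(psi z ^^ Suc j) s = shift z (phiS (shift (\<Sum>i<j. (phib ^^ i) z) ((phiS ^^ j) s)))"
    by (simp only: funpow.simps(2) o_apply Suc.IH[OF Suc.prems] psi_def)
  also have "\<dots> = shift (z + phib (\<Sum>i<j. (phib ^^ i) z)) ((phiS ^^ Suc j) s)"
    using phiS_shift[OF phiS_pow_carrier[OF Suc.prems]] by (simp add: shift_shift)
  also have "z + phib (\<Sum>i<j. (phib ^^ i) z) = (\<Sum>i<Suc j. (phib ^^ i) z)"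
    unfolding sum.lessThan_Suc_shift by (simp add: phib_sum funpow_swap1)
  finally show ?case .
qed


end


context wr begin
lemma grp_swap: assumes "p \<in> carrier G" "q \<in> carrier G" "r \<in> carrier G" "s \<in> carrier G"
  and eq: "p \<otimes> inv q = r \<otimes> inv s"
  shows "p \<otimes> inv r = q \<otimes> inv s"
proof -
  have h: "inv q \<otimes> (q \<otimes> inv r) = inv r" using assms(1-4) by (simp add: m_assoc[symmetric])
  have "p \<otimes> inv r = (p \<otimes> inv q) \<otimes> (q \<otimes> inv r)" using assms(1-4) h by (simp add: m_assoc)
  also have "\<dots> = (r \<otimes> inv s) \<otimes> (q \<otimes> inv r)" by (simp only: eq)
  also have "\<dots> = q \<otimes> inv s"
  proof -
    have h2: "r \<otimes> (inv r \<otimes> t) = t" if "t \<in> carrier G" for t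
      using assms(3) that by (simp add: m_assoc[symmetric])
    have h3: "r \<otimes> (inv r \<otimes> inv s) = inv s" using h2 assms(4) by simp
    show ?thesis using assms(1-4) by (simp add: m_ac h3)
  qed
  finally show ?thesis .
qed
end

context mtR begin

lemma psi_per: "s \<in> carrier LS \<Longrightarrow> (psi z ^^ n) s = s"
  using psi_pow[where s=s and z=z and j=n] phiS_per[of s] Nsum_zero[of z] by (simp add: Nsum_def shift_def)

lemma psi_pow_mod: assumes a: "a \<in> carrier LS" shows "(psi z ^^ j) a = (psi z ^^ (j mod n)) a"
proof -
  have "(psi z ^^ (n * q + r)) a = (psi z ^^ r) a" for q r
  proof (induction q)
    case 0 then show ?case by simp
  next
    case (Suc q)
    have "n * Suc q + r = n + (n * q + r)" by simp
    then have "(psi z ^^ (n * Suc q + r)) a = (psi z ^^ n) ((psi z ^^ (n * q + r)) a)"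
      by (simp only: funpow_add o_apply)
    also have "\<dots> = (psi z ^^ (n * q + r)) a" using psi_per psi_pow_carrier[OF a] by blast
    finally show ?case using Suc by simp
  qed
  from this[of "j div n" "j mod n"] show ?thesis by simp
qed

definition Th :: "int^'n \<Rightarrow> (int^'n \<Rightarrow> 'a) \<Rightarrow> (int^'n \<Rightarrow> 'a)" where
  "Th z a = (\<lambda>x. a x \<otimes> inv (psi z a x))"

lemma Th_carrier: assumes a: "a \<in> carrier LS" shows "Th z a \<in> carrier LS"
proof -
  interpret L: comm_group LS by (rule lamp_comm_group)
  have "inv\<^bsub>LS\<^esub> (psi z a) = (\<lambda>x. inv (psi z a x))" using lamp_inv psi_carrier[OF a] by blast
  then have eqT: "Th z a = a \<otimes>\<^bsub>LS\<^esub> inv\<^bsub>LS\<^esub> (psi z a)" by (simp add: Th_def)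
  show ?thesis unfolding eqT by (rule L.m_closed[OF a L.inv_closed[OF psi_carrier[OF a]]])
qed

lemma LS_inv_carrier: "a \<in> carrier LS \<Longrightarrow> (\<lambda>x. inv (a x)) \<in> carrier LS"
  using supp_inv[of a] by (simp add: lamp_carrier)

lemma LS_mult_carrier: assumes "a \<in> carrier LS" "b \<in> carrier LS" shows "(\<lambda>x. a x \<otimes> b x) \<in> carrier LS"
proof -
  interpret L: comm_group LS by (rule lamp_comm_group)
  show ?thesis using L.m_closed[OF assms] by simp
qed

lemma Th_pow: assumes a: "a \<in> carrier LS"
  shows "(psi z ^^ j) (Th z a) = (\<lambda>x. (psi z ^^ j) a x \<otimes> inv ((psi z ^^ Suc j) a x))"
proof (induction j)
  case 0 then show ?case by (simp add: Th_def)
next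
  case (Suc j)
  have c1: "(psi z ^^ j) a \<in> carrier LS" using psi_pow_carrier[OF a] .
  have c2: "(\<lambda>x. inv ((psi z ^^ Suc j) a x)) \<in> carrier LS"
    using LS_inv_carrier psi_pow_carrier[OF a] by blast
  have "(psi z ^^ Suc j) (Th z a) = psi z (\<lambda>x. (psi z ^^ j) a x \<otimes> inv ((psi z ^^ Suc j) a x))"
    using Suc by simp
  also have "\<dots> = (\<lambda>x. psi z ((psi z ^^ j) a) x \<otimes> psi z (\<lambda>x. inv ((psi z ^^ Suc j) a x)) x)"
    by (rule psi_mult[OF c1 c2])
  also have "\<dots> = (\<lambda>x. (psi z ^^ Suc j) a x \<otimes> inv ((psi z ^^ Suc (Suc j)) a x))"
    using psi_inv[OF psi_pow_carrier[OF a, where z=z and j="Suc j"]] by simp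
  finally show ?case .
qed

lemma Th_inj: assumes nf: "\<forall>s \<in> carrier LS. psi z s = s \<longrightarrow> s = (\<lambda>x. \<one>)"
  shows "inj_on (Th z) (carrier LS)"
proof (rule inj_onI)
  fix a b assume a: "a \<in> carrier LS" and b: "b \<in> carrier LS" and eq: "Th z a = Th z b"
  let ?c = "\<lambda>x. a x \<otimes> inv (b x)"
  have cL: "?c \<in> carrier LS" using LS_mult_carrier[OF a LS_inv_carrier[OF b]] .
  have "psi z ?c = (\<lambda>x. psi z a x \<otimes> inv (psi z b x))"
    using psi_mult[OF a LS_inv_carrier[OF b]] psi_inv[OF b] by simp
  also have "\<dots> = ?c"
  proof
    fix x
    have g: "a x \<in> carrier G" "b x \<in> carrier G" "psi z a x \<in> carrier G" "psi z b x \<in> carrier G"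
      using a b psi_carrier[OF a] psi_carrier[OF b] by (auto simp: lamp_carrier)
    have "a x \<otimes> inv (psi z a x) = b x \<otimes> inv (psi z b x)" using eq by (simp add: Th_def fun_eq_iff)
    from grp_swap[OF g(1) g(3) g(2) g(4) this] show "psi z a x \<otimes> inv (psi z b x) = a x \<otimes> inv (b x)"
      by simp
  qed
  finally have "?c = (\<lambda>x. \<one>)" using nf cL by blast
  then show "a = b"
  proof -
    assume c: "?c = (\<lambda>x. \<one>)"
    show "a = b"
    proof
      fix x
      have "a x \<otimes> inv (b x) = \<one>" using c by metis
      moreover have "a x \<in> carrier G" "b x \<in> carrier G" using a b by (auto simp: lamp_carrier)
      ultimately show "a x = b x" by (metis inv_equality inv_inv inv_closed m_comm)
    qed
  qed
qed

end


context mtR begin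

lemma supp_finite: "a \<in> carrier LS \<Longrightarrow> finite (supp G a)"
  by (simp add: lamp_carrier)

lemma Th_surj: assumes nf: "\<forall>s \<in> carrier LS. psi z s = s \<longrightarrow> s = (\<lambda>x. \<one>)"
  and u: "u \<in> carrier LS"
  shows "\<exists>a \<in> carrier LS. Th z a = u"
proof -
  define S where "S = (\<Union>j<n. supp G ((psi z ^^ j) u))"
  have finS: "finite S" unfolding S_def by (simp add: supp_finite psi_pow_carrier[OF u])
  define U where "U = {a \<in> carrier LS. \<forall>j<n. supp G ((psi z ^^ j) a) \<subseteq> S}"
  have allj: "supp G ((psi z ^^ j) a) \<subseteq> S" if "a \<in> U" for a j
  proof -
    have aL: "a \<in> carrier LS" using that by (simp add: U_def)
    have "(psi z ^^ j) a = (psi z ^^ (j mod n)) a" by (rule psi_pow_mod[OF aL])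
    moreover have "j mod n < n" using npos by simp
    ultimately show ?thesis using that unfolding U_def by auto
  qed
  have uU: "u \<in> U" unfolding U_def S_def using u by blast
  have ThU: "Th z ` U \<subseteq> U"
  proof
    fix b assume "b \<in> Th z ` U"
    then obtain a where a: "a \<in> U" and b: "b = Th z a" by blast
    have aL: "a \<in> carrier LS" using a by (simp add: U_def)
    have sj: "supp G ((psi z ^^ j) b) \<subseteq> S" for j
    proof -
      have "supp G ((psi z ^^ j) b) \<subseteq> supp G ((psi z ^^ j) a) \<union> supp G (\<lambda>x. inv ((psi z ^^ Suc j) a x))"
        unfolding b Th_pow[OF aL] by (rule supp_mult)
      also have "\<dots> = supp G ((psi z ^^ j) a) \<union> supp G ((psi z ^^ Suc j) a)"
        using supp_inv[of "(psi z ^^ Suc j) a"] psi_pow_carrier[OF aL, where z=z and j="Suc j"]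
        unfolding lamp_carrier by simp
      also have "\<dots> \<subseteq> S" using allj[OF a] by blast
      finally show ?thesis .
    qed
    then show "b \<in> U" unfolding U_def using Th_carrier[OF aL] b by blast
  qed
  have finU: "finite U"
  proof (rule finite_subset)
    show "U \<subseteq> {f. \<forall>x. (x \<in> S \<longrightarrow> f x \<in> carrier G) \<and> (x \<notin> S \<longrightarrow> f x = \<one>)}"
    proof
      fix a assume a: "a \<in> U"
      have "supp G a \<subseteq> S" using allj[OF a, of 0] by simp
      then show "a \<in> {f. \<forall>x. (x \<in> S \<longrightarrow> f x \<in> carrier G) \<and> (x \<notin> S \<longrightarrow> f x = \<one>)}"
        using a by (auto simp: U_def lamp_carrier supp_def)
    qed
    show "finite {f. \<forall>x. (x \<in> S \<longrightarrow> f x \<in> carrier G) \<and> (x \<notin> S \<longrightarrow> f x = \<one>)}"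
      by (rule finite_set_of_finite_funs[OF finS finG])
  qed
  have injU: "inj_on (Th z) U"
    using Th_inj[OF nf] by (rule inj_on_subset) (auto simp: U_def)
  have "Th z ` U = U" by (rule endo_inj_surj[OF finU ThU injU])
  then have "u \<in> Th z ` U" using uU by simp
  then show ?thesis by (auto simp: U_def)
qed

end


definition nrm :: "int^'n::finite \<Rightarrow> int" where
  "nrm x = Max (range (\<lambda>i. \<bar>x $ i\<bar>))"

lemma nrm_ge: "\<bar>x $ i\<bar> \<le> nrm x"
  unfolding nrm_def by (rule Max_ge) auto

lemma nrm_le: "(\<And>i. \<bar>x $ i\<bar> \<le> b) \<Longrightarrow> nrm x \<le> b"
  unfolding nrm_def by (subst Max_le_iff) auto

lemma nrm_attained: "\<exists>i. nrm x = \<bar>x $ i\<bar>"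
proof -
  have "Max (range (\<lambda>i. \<bar>x $ i\<bar>)) \<in> range (\<lambda>i. \<bar>x $ i\<bar>)" by (rule Max_in) auto
  then obtain i where "Max (range (\<lambda>i. \<bar>x $ i\<bar>)) = \<bar>x $ i\<bar>" by blast
  then show ?thesis unfolding nrm_def by blast
qed

lemma nrm_nonneg: "0 \<le> nrm x"
  using nrm_ge[of x] abs_ge_zero order_trans by blast

lemma nrm_add: "nrm (x + y) \<le> nrm x + nrm y"
proof (rule nrm_le)
  fix i
  have "\<bar>(x + y) $ i\<bar> \<le> \<bar>x $ i\<bar> + \<bar>y $ i\<bar>" by simp
  also have "\<dots> \<le> nrm x + nrm y" using nrm_ge[of x i] nrm_ge[of y i] by simp
  finally show "\<bar>(x + y) $ i\<bar> \<le> nrm x + nrm y" .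
qed

lemma nrm_minus: "nrm (- x) = nrm x"
  unfolding nrm_def by simp

lemma nrm_diff: "nrm (x - y) \<le> nrm x + nrm y"
  using nrm_add[of x "-y"] nrm_minus[of y] by simp

lemma nrm_diff_ge: "nrm x - nrm y \<le> nrm (x + y)"
  using nrm_diff[of "x + y" y] by simp

lemma nrm_smult: "nrm (of_nat c *s x) = int c * nrm x"
proof (rule antisym)
  show "nrm (of_nat c *s x) \<le> int c * nrm x"
    by (rule nrm_le) (simp add: abs_mult mult_left_mono nrm_ge)
  obtain i where i: "nrm x = \<bar>x $ i\<bar>" using nrm_attained by blast
  have "int c * nrm x = \<bar>(of_nat c *s x) $ i\<bar>" using i by (simp add: abs_mult)
  also have "\<dots> \<le> nrm (of_nat c *s x)" by (rule nrm_ge)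
  finally show "int c * nrm x \<le> nrm (of_nat c *s x)" .
qed

lemma nrm_pos: assumes "x \<noteq> 0" shows "1 \<le> nrm x"
proof -
  obtain i where "x $ i \<noteq> 0" using assms by (auto simp: vec_eq_iff)
  then have "1 \<le> \<bar>x $ i\<bar>" by simp
  then show ?thesis using nrm_ge[of x i] by simp
qed

lemma nrm_zero_iff: "nrm x = 0 \<longleftrightarrow> x = 0"
proof
  assume "nrm x = 0" then show "x = 0" using nrm_pos[of x] by (cases "x = 0") auto
next
  assume "x = 0" then show "nrm x = 0" using nrm_le[of x 0] nrm_nonneg[of x] by simp
qed


context wr begin

definition red :: "nat \<Rightarrow> int^'n \<Rightarrow> int^'n" where
  "red m x = (\<chi> i. x $ i mod int m)"
definition box0 :: "nat \<Rightarrow> (int^'n) set" where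
  "box0 m = {x. \<forall>i. 0 \<le> x $ i \<and> x $ i < int m}"
definition Pm :: "nat \<Rightarrow> (int^'n \<Rightarrow> 'a) \<Rightarrow> (int^'n \<Rightarrow> 'a)" where
  "Pm m a = (\<lambda>x. finprod G a {y \<in> supp G a. red m y = red m x})"
definition bx :: "nat \<Rightarrow> (int^'n \<Rightarrow> 'a) \<Rightarrow> (int^'n \<Rightarrow> 'a)" where
  "bx m f = (\<lambda>x. if x \<in> box0 m then f x else \<one>)"
definition Per :: "nat \<Rightarrow> (int^'n \<Rightarrow> 'a) set" where
  "Per m = {f. (\<forall>x. f x \<in> carrier G) \<and> (\<forall>x. f (red m x) = f x)}"

lemma red_idem: "red m (red m x) = red m x"
  by (simp add: red_def)

lemma red_box: "m > 0 \<Longrightarrow> red m x \<in> box0 m"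
  by (simp add: red_def box0_def)

lemma red_box_id: "x \<in> box0 m \<Longrightarrow> red m x = x"
  by (simp add: red_def box0_def vec_eq_iff)

lemma red_add0: "red m v = 0 \<Longrightarrow> red m (y + v) = red m y"
  by (simp add: red_def vec_eq_iff mod_add_right_eq[symmetric])

lemma red_zero_iff: "red m v = 0 \<longleftrightarrow> v = of_nat m *s (\<chi> i. v $ i div int m)"
proof
  assume "red m v = 0"
  then have "\<And>i. v $ i mod int m = 0" by (simp add: red_def vec_eq_iff)
  then have "\<And>i. int m dvd v $ i" by (simp add: dvd_eq_mod_eq_0)
  then show "v = of_nat m *s (\<chi> i. v $ i div int m)" by (simp add: vec_eq_iff dvd_mult_div_cancel)
next
  assume "v = of_nat m *s (\<chi> i. v $ i div int m)"
  then have "\<And>i. v $ i = int m * (v $ i div int m)" by (metis vector_smult_component vec_lambda_beta of_nat_id)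
  then have "\<And>i. v $ i mod int m = 0" by (metis mod_mult_self1_is_0)
  then show "red m v = 0" by (simp add: red_def vec_eq_iff)
qed

lemma red_smult: "red m (of_nat m *s q) = 0"
  by (simp add: red_def vec_eq_iff)

lemma red_diff_red: "red m (y - red m y) = 0"
  by (simp add: red_def vec_eq_iff mod_diff_left_eq[symmetric])

lemma finite_box0: "finite (box0 m)"
proof -
  have "box0 m \<subseteq> vec_lambda ` {f. \<forall>i. (i \<in> UNIV \<longrightarrow> f i \<in> {0..<int m}) \<and> (i \<notin> UNIV \<longrightarrow> f i = 0)}"
  proof
    fix x assume "x \<in> box0 m"
    then show "x \<in> vec_lambda ` {f. \<forall>i. (i \<in> UNIV \<longrightarrow> f i \<in> {0..<int m}) \<and> (i \<notin> UNIV \<longrightarrow> f i = 0)}"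
      by (auto simp: box0_def image_iff intro!: exI[of _ "vec_nth x"])
  qed
  moreover have "finite {f. \<forall>i. (i \<in> (UNIV :: 'n set) \<longrightarrow> f i \<in> {0..<int m}) \<and> (i \<notin> UNIV \<longrightarrow> f i = 0)}"
    by (rule finite_set_of_finite_funs) auto
  ultimately show ?thesis using finite_subset by blast
qed

lemma Per_finite: assumes finG: "finite (carrier G)" and m: "m > 0" shows "finite (Per m)"
proof -
  let ?S = "{g. \<forall>x. (x \<in> box0 m \<longrightarrow> g x \<in> carrier G) \<and> (x \<notin> box0 m \<longrightarrow> g x = \<one>)}"
  have "Per m \<subseteq> (\<lambda>g x. g (red m x)) ` ?S"
  proof
    fix f assume f: "f \<in> Per m"
    have "f = (\<lambda>x. bx m f (red m x))"
    proof
      fix x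
      show "f x = bx m f (red m x)"
        using f red_box[OF m, of x] by (simp add: bx_def Per_def)
    qed
    moreover have "bx m f \<in> ?S" using f by (auto simp: bx_def Per_def)
    ultimately show "f \<in> (\<lambda>g x. g (red m x)) ` ?S" by blast
  qed
  moreover have "finite ?S" by (rule finite_set_of_finite_funs[OF finite_box0 finG])
  ultimately show ?thesis using finite_subset by blast
qed

end


context wr begin

lemma supp_LS_finite: "a \<in> carrier LS \<Longrightarrow> finite (supp G a)"
  by (simp add: lamp_carrier)

lemma LS_val: "a \<in> carrier LS \<Longrightarrow> a x \<in> carrier G"
  by (simp add: lamp_carrier)

lemma Pm_carrier: assumes a: "a \<in> carrier LS" shows "Pm m a \<in> Per m"
  unfolding Per_def Pm_def using a by (auto simp: LS_val red_idem intro!: finprod_closed)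

lemma Pm_mult: assumes a: "a \<in> carrier LS" and b: "b \<in> carrier LS"
  shows "Pm m (\<lambda>x. a x \<otimes> b x) = (\<lambda>x. Pm m a x \<otimes> Pm m b x)"
proof
  fix x
  let ?T = "(supp G a \<union> supp G b) \<inter> {y. red m y = red m x}"
  have finT: "finite ?T" using a b by (simp add: supp_LS_finite)
  have e1: "finprod G (\<lambda>x. a x \<otimes> b x) {y \<in> supp G (\<lambda>x. a x \<otimes> b x). red m y = red m x}
        = finprod G (\<lambda>x. a x \<otimes> b x) ?T"
    by (rule finprod_mono_neutral_cong_left[OF finT])
       (use supp_mult[of a b] a b in \<open>auto simp: supp_def LS_val\<close>)
  have e2: "finprod G a {y \<in> supp G a. red m y = red m x} = finprod G a ?T"
    by (rule finprod_mono_neutral_cong_left[OF finT]) (use a in \<open>auto simp: supp_def LS_val\<close>)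
  have e3: "finprod G b {y \<in> supp G b. red m y = red m x} = finprod G b ?T"
    by (rule finprod_mono_neutral_cong_left[OF finT]) (use b in \<open>auto simp: supp_def LS_val\<close>)
  show "Pm m (\<lambda>x. a x \<otimes> b x) x = Pm m a x \<otimes> Pm m b x"
    unfolding Pm_def e1 e2 e3 using a b by (simp add: LS_val Pi_def)
qed

lemma Pm_one: "Pm m (\<lambda>x. \<one>) = (\<lambda>x. \<one>)"
  by (simp add: Pm_def supp_def)

lemma Pm_inv: assumes a: "a \<in> carrier LS" shows "Pm m (\<lambda>x. inv (a x)) = (\<lambda>x. inv (Pm m a x))"
proof
  fix x
  have ai: "(\<lambda>x. inv (a x)) \<in> carrier LS" using a supp_inv[of a] by (simp add: lamp_carrier)
  have "Pm m (\<lambda>x. inv (a x) \<otimes> a x) = (\<lambda>x. Pm m (\<lambda>x. inv (a x)) x \<otimes> Pm m a x)"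
    by (rule Pm_mult[OF ai a])
  moreover have "(\<lambda>x. inv (a x) \<otimes> a x) = (\<lambda>x. \<one>)" using a by (simp add: LS_val)
  ultimately have "Pm m (\<lambda>x. inv (a x)) x \<otimes> Pm m a x = \<one>" using Pm_one by metis
  moreover have "Pm m (\<lambda>x. inv (a x)) x \<in> carrier G" "Pm m a x \<in> carrier G"
    using Pm_carrier[OF ai] Pm_carrier[OF a] by (auto simp: Per_def)
  ultimately show "Pm m (\<lambda>x. inv (a x)) x = inv (Pm m a x)" using inv_equality by metis
qed

lemma Pm_shift: assumes a: "a \<in> carrier LS" and v: "red m v = 0"
  shows "Pm m (shift v a) = Pm m a"
proof
  fix x
  have set: "{y \<in> supp G (shift v a). red m y = red m x} = (\<lambda>y. y + v) ` {y \<in> supp G a. red m y = red m x}"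
    using supp_shift[of a v] red_add0[OF v] by (auto simp: shift_def)
  have "Pm m (shift v a) x = finprod G (shift v a) ((\<lambda>y. y + v) ` {y \<in> supp G a. red m y = red m x})"
    unfolding Pm_def set ..
  also have "\<dots> = finprod G (\<lambda>y. shift v a (y + v)) {y \<in> supp G a. red m y = red m x}"
    by (rule finprod_reindex) (use a in \<open>auto simp: LS_val shift_def\<close>)
  also have "\<dots> = Pm m a x" by (simp add: Pm_def shift_def)
  finally show "Pm m (shift v a) x = Pm m a x" .
qed

lemma bx_LS: assumes f: "f \<in> Per m" shows "bx m f \<in> carrier LS"
proof -
  have "supp G (bx m f) \<subseteq> box0 m" by (auto simp: supp_def bx_def)
  then show ?thesis using f finite_box0[of m] by (auto simp: lamp_carrier bx_def Per_def intro: finite_subset)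
qed

lemma Pm_bx: assumes f: "f \<in> Per m" and m: "m > 0" shows "Pm m (bx m f) = f"
proof
  fix x
  have rx: "red m x \<in> box0 m" by (rule red_box[OF m])
  have sub: "{y \<in> supp G (bx m f). red m y = red m x} \<subseteq> {red m x}"
    by (auto simp: supp_def bx_def red_box_id)
  have "Pm m (bx m f) x = finprod G (bx m f) {red m x}"
    unfolding Pm_def
    by (rule finprod_mono_neutral_cong_left) (use sub f in \<open>auto simp: supp_def bx_def Per_def red_idem\<close>)
  also have "\<dots> = bx m f (red m x)" using f by (simp add: bx_def Per_def)
  also have "\<dots> = f x" using rx f by (simp add: bx_def Per_def)
  finally show "Pm m (bx m f) x = f x" .
qed

lemma bx_mult: "bx m (\<lambda>x. f x \<otimes> g x) = (\<lambda>x. bx m f x \<otimes> bx m g x)"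
  by (auto simp: bx_def)

lemma int_mod_eq_small: fixes a b :: int
  assumes "a mod int (2 * L + 1) = b mod int (2 * L + 1)" "\<bar>a\<bar> \<le> int L" "\<bar>b\<bar> \<le> int L"
  shows "a = b"
proof (rule ccontr)
  assume ne: "a \<noteq> b"
  have "int (2 * L + 1) dvd (a - b)" using assms(1) by (simp add: mod_eq_dvd_iff)
  then have "\<bar>int (2 * L + 1)\<bar> \<le> \<bar>a - b\<bar>" using ne by (intro dvd_imp_le_int) simp_all
  then show False using assms(2,3) by simp
qed

lemma Pm_box: assumes a: "a \<in> carrier LS" and sa: "supp G a \<subseteq> {y. nrm y \<le> int L}"
  and x: "nrm x \<le> int L"
  shows "Pm (2 * L + 1) a x = a x"
proof -
  have sub: "{y \<in> supp G a. red (2 * L + 1) y = red (2 * L + 1) x} \<subseteq> {x}"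
  proof
    fix y assume y: "y \<in> {y \<in> supp G a. red (2 * L + 1) y = red (2 * L + 1) x}"
    have "y $ i = x $ i" for i
    proof (rule int_mod_eq_small)
      show "y $ i mod int (2 * L + 1) = x $ i mod int (2 * L + 1)"
        using y by (simp add: red_def vec_eq_iff)
      show "\<bar>y $ i\<bar> \<le> int L" using y sa nrm_ge[of y i] by auto
      show "\<bar>x $ i\<bar> \<le> int L" using x nrm_ge[of x i] by auto
    qed
    then show "y \<in> {x}" by (simp add: vec_eq_iff)
  qed
  show ?thesis
  proof (cases "a x = \<one>")
    case True
    then have e: "{y \<in> supp G a. red (2 * L + 1) y = red (2 * L + 1) x} = {}"
      using sub by (auto simp: supp_def)
    show ?thesis unfolding Pm_def e using True by simp
  next
    case False
    then have e: "{y \<in> supp G a. red (2 * L + 1) y = red (2 * L + 1) x} = {x}"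
      using sub by (auto simp: supp_def)
    show ?thesis unfolding Pm_def e using a by (simp add: LS_val)
  qed
qed

lemma LS_induct: assumes one: "Q (\<lambda>x. \<one>)"
  and delta: "\<And>y g. g \<in> carrier G \<Longrightarrow> Q (\<lambda>x. if x = y then g else \<one>)"
  and mult: "\<And>a b. a \<in> carrier LS \<Longrightarrow> b \<in> carrier LS \<Longrightarrow> Q a \<Longrightarrow> Q b \<Longrightarrow> Q (\<lambda>x. a x \<otimes> b x)"
  and a: "a \<in> carrier LS"
  shows "Q a"
proof -
  have "\<forall>a. a \<in> carrier LS \<and> supp G a = A \<longrightarrow> Q a" if "finite A" for A
    using that
  proof (induction A rule: finite_induct)
    case empty
    show ?case
    proof (intro allI impI)
      fix a assume "a \<in> carrier LS \<and> supp G a = {}"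
      then have "a = (\<lambda>x. \<one>)" by (auto simp: supp_def)
      then show "Q a" using one by simp
    qed
  next
    case (insert y A)
    show ?case
    proof (intro allI impI)
      fix a assume aa: "a \<in> carrier LS \<and> supp G a = insert y A"
      let ?d = "\<lambda>x. if x = y then a y else \<one>"
      let ?a' = "\<lambda>x. if x = y then \<one> else a x"
      have suppa': "supp G ?a' = A" using aa insert(2) by (auto simp: supp_def)
      have a'L: "?a' \<in> carrier LS" unfolding lamp_carrier suppa' using aa insert(1) by (simp add: LS_val)
      have dL: "?d \<in> carrier LS" using aa by (auto simp: lamp_carrier supp_def)
      have eq: "a = (\<lambda>x. ?d x \<otimes> ?a' x)" using aa by (auto simp: LS_val)
      have "Q ?d" using delta aa by (simp add: LS_val)
      moreover have "Q ?a'" using insert(3) a'L suppa' by blast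
      ultimately show "Q a" using mult[OF dL a'L] eq by simp
    qed
  qed
  then show ?thesis using a supp_LS_finite[OF a] by blast
qed

end


context mtR begin

lemma psi_shift: "s \<in> carrier LS \<Longrightarrow> psi z (shift w s) = shift (phib w) (psi z s)"
  by (simp add: psi_def phiS_shift shift_shift add.commute)

lemma phib_red: assumes "red m v = 0" shows "red m (phib v) = 0"
proof -
  have "v = of_nat m *s (\<chi> i. v $ i div int m)" using assms red_zero_iff by blast
  then have "phib v = of_nat m *s phib (\<chi> i. v $ i div int m)" using phib_smult by metis
  then show ?thesis using red_smult by metis
qed

definition psiM :: "int^'n \<Rightarrow> nat \<Rightarrow> (int^'n \<Rightarrow> 'a) \<Rightarrow> (int^'n \<Rightarrow> 'a)" where
  "psiM z m f = Pm m (psi z (bx m f))"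

lemma psiM_mult: assumes f: "f \<in> Per m" and g: "g \<in> Per m"
  shows "psiM z m (\<lambda>x. f x \<otimes> g x) = (\<lambda>x. psiM z m f x \<otimes> psiM z m g x)"
  unfolding psiM_def bx_mult
  using psi_mult[OF bx_LS[OF f] bx_LS[OF g]] Pm_mult[OF psi_carrier[OF bx_LS[OF f]] psi_carrier[OF bx_LS[OF g]]]
  by simp

lemma psiM_carrier: "f \<in> Per m \<Longrightarrow> psiM z m f \<in> Per m"
  unfolding psiM_def by (intro Pm_carrier psi_carrier bx_LS)

lemma Pm_psi: assumes m: "m > 0" and a: "a \<in> carrier LS"
  shows "Pm m (psi z a) = psiM z m (Pm m a)"
proof (rule LS_induct[where Q="\<lambda>a. Pm m (psi z a) = psiM z m (Pm m a)", OF _ _ _ a])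
  have "bx m (\<lambda>x. \<one>) = (\<lambda>x. \<one>)" by (simp add: bx_def)
  then show "Pm m (psi z (\<lambda>x. \<one>)) = psiM z m (Pm m (\<lambda>x. \<one>))" by (simp add: psiM_def Pm_one psi_one)
next
  fix y :: "int^'n" and g assume g2: "g \<in> carrier G"
  let ?d = "\<lambda>x. if x = y then g else \<one>"
  let ?d' = "\<lambda>x. if x = red m y then g else \<one>"
  have dL: "?d \<in> carrier LS" using g2 by (simp add: lamp_carrier supp_def)
  have d'L: "?d' \<in> carrier LS" using g2 by (simp add: lamp_carrier supp_def)
  have Pd: "Pm m ?d = (\<lambda>x. if red m x = red m y then g else \<one>)"
  proof
    fix x
    show "Pm m ?d x = (if red m x = red m y then g else \<one>)"
    proof (cases "g = \<one> \<or> red m x \<noteq> red m y")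
      case True
      then have e: "{w \<in> supp G ?d. red m w = red m x} = {}" by (auto simp: supp_def)
      show ?thesis unfolding Pm_def e using True by auto
    next
      case False
      then have e: "{w \<in> supp G ?d. red m w = red m x} = {y}" by (auto simp: supp_def)
      show ?thesis unfolding Pm_def e using False g2 by simp
    qed
  qed
  have bxd: "bx m (Pm m ?d) = ?d'"
    unfolding Pd using red_box[OF m, of y] by (auto simp: bx_def red_box_id fun_eq_iff)
  have dshift: "?d = shift (y - red m y) ?d'"
    by (auto simp: shift_def fun_eq_iff)
  have "Pm m (psi z ?d) = Pm m (shift (phib (y - red m y)) (psi z ?d'))"
    unfolding dshift[symmetric] using psi_shift[OF d'L] dshift by metis
  also have "\<dots> = Pm m (psi z ?d')"
    by (rule Pm_shift[OF psi_carrier[OF d'L] phib_red[OF red_diff_red]])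
  finally show "Pm m (psi z ?d) = psiM z m (Pm m ?d)" unfolding psiM_def bxd .
next
  fix a b assume a3: "a \<in> carrier LS" and b3: "b \<in> carrier LS"
    and Qa: "Pm m (psi z a) = psiM z m (Pm m a)" and Qb: "Pm m (psi z b) = psiM z m (Pm m b)"
  have "Pm m (psi z (\<lambda>x. a x \<otimes> b x)) = (\<lambda>x. Pm m (psi z a) x \<otimes> Pm m (psi z b) x)"
    using psi_mult[OF a3 b3] Pm_mult[OF psi_carrier[OF a3] psi_carrier[OF b3]] by simp
  also have "\<dots> = psiM z m (\<lambda>x. Pm m a x \<otimes> Pm m b x)"
    using Qa Qb psiM_mult[OF Pm_carrier[OF a3] Pm_carrier[OF b3]] by simp
  also have "\<dots> = psiM z m (Pm m (\<lambda>x. a x \<otimes> b x))" using Pm_mult[OF a3 b3] by simp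
  finally show "Pm m (psi z (\<lambda>x. a x \<otimes> b x)) = psiM z m (Pm m (\<lambda>x. a x \<otimes> b x))" .
qed

end


context wr begin

definition mulf :: "('x \<Rightarrow> 'a) \<Rightarrow> ('x \<Rightarrow> 'a) \<Rightarrow> ('x \<Rightarrow> 'a)" where
  "mulf f g = (\<lambda>x. f x \<otimes> g x)"
definition invf :: "('x \<Rightarrow> 'a) \<Rightarrow> ('x \<Rightarrow> 'a)" where
  "invf f = (\<lambda>x. inv (f x))"

lemma count_hom:
  fixes F :: "('x \<Rightarrow> 'a) set"
  assumes finF: "finite F"
    and val: "\<And>f x. f \<in> F \<Longrightarrow> f x \<in> carrier G"
    and mulF: "\<And>f g. f \<in> F \<Longrightarrow> g \<in> F \<Longrightarrow> mulf f g \<in> F"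
    and invF: "\<And>f. f \<in> F \<Longrightarrow> invf f \<in> F"
    and EF: "\<And>f. f \<in> F \<Longrightarrow> E f \<in> F"
    and Ehom: "\<And>f g. f \<in> F \<Longrightarrow> g \<in> F \<Longrightarrow> E (mulf f g) = mulf (E f) (E g)"
  shows "card F = card {f \<in> F. E f = (\<lambda>x. \<one>)} * card (E ` F)"
proof -
  let ?K = "{f \<in> F. E f = (\<lambda>x. \<one>)}"
  have fiber: "card {f \<in> F. E f = y} = card ?K" if y: "y \<in> E ` F" for y
  proof -
    obtain f0 where f0: "f0 \<in> F" "E f0 = y" using y by blast
    have inj: "inj_on (mulf f0) ?K"
    proof (rule inj_onI)
      fix k k' assume k: "k \<in> ?K" and k': "k' \<in> ?K" and eq: "mulf f0 k = mulf f0 k'"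
      show "k = k'"
      proof
        fix x
        have "f0 x \<otimes> k x = f0 x \<otimes> k' x" using eq by (simp add: mulf_def fun_eq_iff)
        then show "k x = k' x" using val f0(1) k k' by simp
      qed
    qed
    have "{f \<in> F. E f = y} = mulf f0 ` ?K"
    proof
      show "mulf f0 ` ?K \<subseteq> {f \<in> F. E f = y}"
      proof
        fix f assume "f \<in> mulf f0 ` ?K"
        then obtain k where k: "k \<in> ?K" and f: "f = mulf f0 k" by blast
        have "E f = mulf y (\<lambda>x. \<one>)" using f k f0 Ehom by simp
        also have "\<dots> = y" using val EF f0 by (auto simp: mulf_def)
        finally show "f \<in> {f \<in> F. E f = y}" using f k f0 mulF by simp
      qed
      show "{f \<in> F. E f = y} \<subseteq> mulf f0 ` ?K"
      proof
        fix f assume f: "f \<in> {f \<in> F. E f = y}"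
        let ?k = "mulf (invf f0) f"
        have kF: "?k \<in> F" using f f0 mulF invF by simp
        have one: "E (\<lambda>x. \<one>) = (\<lambda>x. \<one>)"
        proof -
          have oF: "mulf f0 (invf f0) \<in> F" using f0 mulF invF by simp
          have o: "mulf f0 (invf f0) = (\<lambda>x. \<one>)" using val f0 by (simp add: mulf_def invf_def)
          have mm: "mulf (\<lambda>x. \<one>) (\<lambda>x. \<one>) = (\<lambda>x. \<one>)" by (simp add: mulf_def)
          have "E (\<lambda>x. \<one>) = mulf (E (\<lambda>x. \<one>)) (E (\<lambda>x. \<one>))"
            using Ehom[OF oF oF] unfolding o mm .
          then show ?thesis using val[OF EF[OF oF]] o by (auto simp: mulf_def fun_eq_iff)
        qed
        have Einv: "E (invf f0) = invf (E f0)"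
        proof
          fix x
          have "mulf (invf f0) f0 = (\<lambda>x. \<one>)" using val f0 by (simp add: mulf_def invf_def)
          then have "mulf (E (invf f0)) (E f0) = (\<lambda>x. \<one>)" using Ehom[OF invF[OF f0(1)] f0(1)] one by simp
          then have "E (invf f0) x \<otimes> E f0 x = \<one>" by (simp add: mulf_def fun_eq_iff)
          moreover have "E (invf f0) x \<in> carrier G" using val EF invF f0 by blast
          moreover have "E f0 x \<in> carrier G" using val EF f0 by blast
          ultimately have "inv (E f0 x) = E (invf f0) x" by (intro inv_equality)
          then show "E (invf f0) x = invf (E f0) x" by (simp add: invf_def)
        qed
        have yv: "\<And>x. y x \<in> carrier G" using val EF f0 by blast
        have "E ?k = (\<lambda>x. \<one>)" using Ehom[OF invF[OF f0(1)]] f f0 Einv yv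
          by (auto simp: mulf_def invf_def fun_eq_iff)
        moreover have "f = mulf f0 ?k" using val f f0 by (auto simp: mulf_def invf_def fun_eq_iff m_assoc[symmetric])
        ultimately show "f \<in> mulf f0 ` ?K" using kF by blast
      qed
    qed
    then show ?thesis using inj by (simp add: card_image)
  qed
  have "F = (\<Union>y \<in> E ` F. {f \<in> F. E f = y})" by blast
  then have "card F = card (\<Union>y \<in> E ` F. {f \<in> F. E f = y})" by simp
  also have "\<dots> = (\<Sum>y \<in> E ` F. card {f \<in> F. E f = y})"
    by (rule card_UN_disjoint) (use finF in auto)
  also have "\<dots> = (\<Sum>y \<in> E ` F. card ?K)" using fiber by simp
  also have "\<dots> = card ?K * card (E ` F)" by simp
  finally show ?thesis .
qed

lemma count_fibers:
  fixes F :: "('x \<Rightarrow> 'a) set"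
  assumes finF: "finite F" and finC: "finite C" and kap: "\<And>f. f \<in> F \<Longrightarrow> kap f \<in> C"
    and fib: "\<And>f f'. f \<in> F \<Longrightarrow> f' \<in> F \<Longrightarrow> kap f = kap f' \<Longrightarrow> f' \<in> mulf f ` I"
    and finI: "finite I"
  shows "card F \<le> card C * card I"
proof -
  have "F = (\<Union>c \<in> kap ` F. {f \<in> F. kap f = c})" by blast
  then have "card F = card (\<Union>c \<in> kap ` F. {f \<in> F. kap f = c})" by simp
  also have "\<dots> \<le> (\<Sum>c \<in> kap ` F. card {f \<in> F. kap f = c})"
    by (rule card_UN_le[OF finite_imageI[OF finF]])
  also have "\<dots> \<le> (\<Sum>c \<in> kap ` F. card I)"
  proof (rule sum_mono)
    fix c assume "c \<in> kap ` F"
    then obtain f0 where f0: "f0 \<in> F" "kap f0 = c" by blast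
    have "{f \<in> F. kap f = c} \<subseteq> mulf f0 ` I" using fib f0 by blast
    then have "card {f \<in> F. kap f = c} \<le> card (mulf f0 ` I)" by (rule card_mono[OF finite_imageI[OF finI]])
    also have "\<dots> \<le> card I" by (rule card_image_le[OF finI])
    finally show "card {f \<in> F. kap f = c} \<le> card I" .
  qed
  also have "\<dots> = card (kap ` F) * card I" by simp
  also have "\<dots> \<le> card C * card I"
    by (rule mult_right_mono) (use kap finC in \<open>auto intro: card_mono\<close>)
  finally show ?thesis .
qed

end


context mtR begin

definition Em :: "int^'n \<Rightarrow> nat \<Rightarrow> (int^'n \<Rightarrow> 'a) \<Rightarrow> (int^'n \<Rightarrow> 'a)" where
  "Em z m f = mulf f (invf (psiM z m f))"

lemma Per_val: "f \<in> Per m \<Longrightarrow> f x \<in> carrier G"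
  by (simp add: Per_def)

lemma Per_mulf: "f \<in> Per m \<Longrightarrow> g \<in> Per m \<Longrightarrow> mulf f g \<in> Per m"
  by (simp add: Per_def mulf_def)

lemma Per_invf: "f \<in> Per m \<Longrightarrow> invf f \<in> Per m"
  by (simp add: Per_def invf_def)

lemma Em_Per: "f \<in> Per m \<Longrightarrow> Em z m f \<in> Per m"
  unfolding Em_def using psiM_carrier by (intro Per_mulf Per_invf)

lemma Em_hom: assumes f: "f \<in> Per m" and g: "g \<in> Per m"
  shows "Em z m (mulf f g) = mulf (Em z m f) (Em z m g)"
proof -
  have p: "psiM z m (mulf f g) = mulf (psiM z m f) (psiM z m g)"
    using psiM_mult[OF f g] by (simp add: mulf_def)
  show ?thesis
  proof
    fix x
    have c: "f x \<in> carrier G" "g x \<in> carrier G" "psiM z m f x \<in> carrier G" "psiM z m g x \<in> carrier G"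
      using Per_val[OF f] Per_val[OF g] Per_val[OF psiM_carrier[OF f]] Per_val[OF psiM_carrier[OF g]] by auto
    then show "Em z m (mulf f g) x = mulf (Em z m f) (Em z m g) x"
      unfolding Em_def p by (simp add: mulf_def invf_def inv_mult m_ac)
  qed
qed

lemma reid_self: "g \<in> carrier WR \<Longrightarrow> g \<in> reid_class WR phi g"
proof -
  assume g: "g \<in> carrier WR"
  interpret W: group WR by (rule W_group)
  have i1: "inv\<^bsub>WR\<^esub> \<one>\<^bsub>WR\<^esub> = \<one>\<^bsub>WR\<^esub>" by (rule W.inv_one)
  have p1: "phi \<one>\<^bsub>WR\<^esub> = \<one>\<^bsub>WR\<^esub>" by (rule group_hom.hom_one[OF phi_hom])
  have "g = \<one>\<^bsub>WR\<^esub> \<otimes>\<^bsub>WR\<^esub> g \<otimes>\<^bsub>WR\<^esub> phi (inv\<^bsub>WR\<^esub> \<one>\<^bsub>WR\<^esub>)"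
    unfolding i1 p1 using g by (simp only: W.l_one W.r_one W.one_closed)
  then show ?thesis unfolding reid_class_def by blast
qed

lemma Th_Pm: assumes m: "m > 0" and u: "u \<in> carrier LS"
  shows "Pm m (Th z u) = Em z m (Pm m u)"
proof -
  have "Pm m (Th z u) = (\<lambda>x. Pm m u x \<otimes> Pm m (\<lambda>x. inv (psi z u x)) x)"
    unfolding Th_def by (rule Pm_mult[OF u LS_inv_carrier[OF psi_carrier[OF u]]])
  also have "\<dots> = (\<lambda>x. Pm m u x \<otimes> inv (Pm m (psi z u) x))"
    using Pm_inv[OF psi_carrier[OF u]] by simp
  also have "\<dots> = Em z m (Pm m u)"
    using Pm_psi[OF m u] by (simp add: Em_def mulf_def invf_def)
  finally show ?thesis .
qed

lemma ker_bound: assumes m: "m > 0"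
  shows "card {f \<in> Per m. Em z m f = (\<lambda>x. \<one>)} \<le> card (reid_classes WR phi)"
proof -
  have finF: "finite (Per m)" by (rule Per_finite[OF finG m])
  have cnt: "card (Per m) = card {f \<in> Per m. Em z m f = (\<lambda>x. \<one>)} * card (Em z m ` Per m)"
    by (rule count_hom[OF finF]) (auto simp: Per_val Per_mulf Per_invf Em_Per Em_hom)
  let ?kap = "\<lambda>f. reid_class WR phi (bx m f, z)"
  have kap: "?kap f \<in> reid_classes WR phi" if "f \<in> Per m" for f
    using bx_LS[OF that] unfolding reid_classes_def by (auto simp: wreath_carrier)
  have fib: "f' \<in> mulf f ` (Em z m ` Per m)"
    if f: "f \<in> Per m" and f': "f' \<in> Per m" and eq: "?kap f = ?kap f'" for f f'
  proof -
    have gW: "(bx m f, z) \<in> carrier WR" using bx_LS[OF f] by (simp add: wreath_carrier)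
    have g'W: "(bx m f', z) \<in> carrier WR" using bx_LS[OF f'] by (simp add: wreath_carrier)
    have "(bx m f', z) \<in> reid_class WR phi (bx m f, z)" using reid_self[OF g'W] eq by simp
    then obtain h where h: "h \<in> carrier WR"
      and he: "(bx m f', z) = h \<otimes>\<^bsub>WR\<^esub> (bx m f, z) \<otimes>\<^bsub>WR\<^esub> phi (inv\<^bsub>WR\<^esub> h)"
      unfolding reid_class_def by blast
    obtain u w where uw: "h = (u, w)" by (cases h)
    have uL: "u \<in> carrier LS" using h uw by (simp add: wreath_carrier)
    have "z = w + z + phib (- w)"
      using arg_cong[OF he, of snd] h gW by (simp add: snd_W_mult snd_phi' inv_closed_W W_inv_snd uw)
    then have "phib w = w" by (simp add: phib_minus)
    then have w0: "w = 0" by (rule phib_fix)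
    have invh: "inv\<^bsub>WR\<^esub> (u, 0) = ((\<lambda>x. inv (u x)), 0)" using wreath_inv[of u 0] h uw w0 by simp
    have phiinv: "phi (inv\<^bsub>WR\<^esub> (u, 0)) = ((\<lambda>x. inv (phiS u x)), 0)"
      unfolding invh using phi_Sigma[OF LS_inv_carrier[OF uL]] phiS_inv[OF uL] by simp
    have he': "(bx m f', z) = (u, 0) \<otimes>\<^bsub>WR\<^esub> (bx m f, z) \<otimes>\<^bsub>WR\<^esub> phi (inv\<^bsub>WR\<^esub> (u, 0))"
      using he uw w0 by simp
    have "bx m f' = (\<lambda>x. u x \<otimes> bx m f x \<otimes> inv (phiS u (x - z)))"
      using arg_cong[OF he', of fst] unfolding phiinv by simp
    also have "\<dots> = (\<lambda>x. bx m f x \<otimes> Th z u x)"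
    proof
      fix x
      have c: "u x \<in> carrier G" "bx m f x \<in> carrier G" "phiS u (x - z) \<in> carrier G"
        using uL bx_LS[OF f] phiS_carrier[OF uL] by (auto simp: LS_val)
      then show "u x \<otimes> bx m f x \<otimes> inv (phiS u (x - z)) = bx m f x \<otimes> Th z u x"
        by (simp add: Th_def psi_def m_ac)
    qed
    finally have "Pm m (bx m f') = Pm m (\<lambda>x. bx m f x \<otimes> Th z u x)" by simp
    then have "f' = (\<lambda>x. f x \<otimes> Pm m (Th z u) x)"
      using Pm_bx[OF f' m] Pm_bx[OF f m] Pm_mult[OF bx_LS[OF f] Th_carrier[OF uL]] by simp
    then have "f' = mulf f (Em z m (Pm m u))" using Th_Pm[OF m uL] by (simp add: mulf_def)
    then show ?thesis using Pm_carrier[OF uL] by blast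
  qed
  have finC: "finite (reid_classes WR phi)" by (rule finR)
  have "card (Per m) \<le> card (reid_classes WR phi) * card (Em z m ` Per m)"
    by (rule count_fibers[OF finF finC kap fib]) (use finF in auto)
  moreover have "card (Em z m ` Per m) > 0"
  proof -
    have "(\<lambda>x. \<one>) \<in> Per m" by (simp add: Per_def)
    then show ?thesis using finF by (auto simp: card_gt_0_iff)
  qed
  ultimately show ?thesis unfolding cnt by simp
qed

end


context wr begin

lemma finprod_LS_apply:
  assumes "finite A" "f \<in> A \<rightarrow> carrier LS"
  shows "finprod LS f A x = finprod G (\<lambda>u. f u x) A"
  using assms
proof (induction A rule: finite_induct)
  case empty
  interpret L: comm_group LS by (rule lamp_comm_group)
  show ?case by simp
next
  case (insert a A)
  interpret L: comm_group LS by (rule lamp_comm_group)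
  have fa: "f a \<in> carrier LS" and fA: "f \<in> A \<rightarrow> carrier LS" using insert by auto
  have "finprod LS f (insert a A) = f a \<otimes>\<^bsub>LS\<^esub> finprod LS f A"
    using L.finprod_insert[OF insert(1,2) fA fa] .
  then have "finprod LS f (insert a A) x = f a x \<otimes> finprod LS f A x" by simp
  also have "\<dots> = f a x \<otimes> finprod G (\<lambda>u. f u x) A" using insert(3)[OF fA] by simp
  also have "\<dots> = finprod G (\<lambda>u. f u x) (insert a A)"
    using insert(1,2) fa fA by (simp add: LS_val Pi_def)
  finally show ?case .
qed

lemma finprod_LS_closed: "f \<in> A \<rightarrow> carrier LS \<Longrightarrow> finprod LS f A \<in> carrier LS"
  using comm_monoid.finprod_closed[OF comm_group.axioms(1)[OF lamp_comm_group]] by blast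

end

context mtR begin

lemma psi_finprod:
  assumes "finite A" "f \<in> A \<rightarrow> carrier LS"
  shows "psi z (finprod LS f A) = finprod LS (\<lambda>u. psi z (f u)) A"
  using assms
proof (induction A rule: finite_induct)
  case empty
  interpret L: comm_group LS by (rule lamp_comm_group)
  show ?case by (simp add: psi_one)
next
  case (insert a A)
  interpret L: comm_group LS by (rule lamp_comm_group)
  have fa: "f a \<in> carrier LS" and fA: "f \<in> A \<rightarrow> carrier LS" using insert by auto
  have pA: "(\<lambda>u. psi z (f u)) \<in> A \<rightarrow> carrier LS" using fA psi_carrier by auto
  have "psi z (finprod LS f (insert a A)) = psi z (f a \<otimes>\<^bsub>LS\<^esub> finprod LS f A)"
    using L.finprod_insert[OF insert(1,2) fA fa] by simp
  also have "\<dots> = psi z (f a) \<otimes>\<^bsub>LS\<^esub> psi z (finprod LS f A)"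
    using psi_mult[OF fa finprod_LS_closed[OF fA]] by simp
  also have "\<dots> = psi z (f a) \<otimes>\<^bsub>LS\<^esub> finprod LS (\<lambda>u. psi z (f u)) A"
    using insert(3)[OF fA] by simp
  also have "\<dots> = finprod LS (\<lambda>u. psi z (f u)) (insert a A)"
    using L.finprod_insert[OF insert(1,2) pA psi_carrier[OF fa]] by simp
  finally show ?case .
qed

end


context mtR begin

definition e0 :: "int^'n" where "e0 = (\<chi> i. 1)"
definition Orb :: "(int^'n) set" where "Orb = (\<lambda>j. (phib ^^ j) e0) ` {..<n}"

lemma e0_nz: "e0 \<noteq> 0" by (simp add: e0_def vec_eq_iff)

lemma Orb_finite: "finite Orb" by (simp add: Orb_def)

lemma Orb_ne: "Orb \<noteq> {}" using npos by (auto simp: Orb_def)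

lemma phib_Orb: "phib ` Orb = Orb"
proof (rule endo_inj_surj[OF Orb_finite])
  show "phib ` Orb \<subseteq> Orb"
  proof
    fix v assume "v \<in> phib ` Orb"
    then obtain j where j: "j < n" "v = phib ((phib ^^ j) e0)" by (auto simp: Orb_def)
    then have "v = (phib ^^ Suc j) e0" by simp
    also have "\<dots> = (phib ^^ (Suc j mod n)) e0" by (rule phib_pow_mod[symmetric])
    finally show "v \<in> Orb" using npos by (auto simp: Orb_def)
  qed
  show "inj_on phib Orb" using phib_inj by (simp add: inj_on_def inj_def)
qed

lemma Orb_nz: "0 \<notin> Orb"
proof
  assume "0 \<in> Orb"
  then obtain j where "(phib ^^ j) e0 = 0" by (auto simp: Orb_def)
  moreover have "(phib ^^ j) 0 = 0" by (rule phib_pow_0)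
  moreover have "inj (phib ^^ j)" by (rule inj_fn[OF phib_inj])
  ultimately show False using e0_nz by (metis injD)
qed

definition sig :: "nat \<Rightarrow> (int^'n \<Rightarrow> 'a) \<Rightarrow> (int^'n \<Rightarrow> 'a)" where
  "sig c s = finprod LS (\<lambda>u. shift (of_nat c *s u) s) Orb"

lemma sig_fun: "s \<in> carrier LS \<Longrightarrow> (\<lambda>u. shift (of_nat c *s u) s) \<in> A \<rightarrow> carrier LS"
  using shift_LS by blast

lemma sig_carrier: "s \<in> carrier LS \<Longrightarrow> sig c s \<in> carrier LS"
  unfolding sig_def by (rule finprod_LS_closed[OF sig_fun])

lemma sig_apply: "s \<in> carrier LS \<Longrightarrow> sig c s x = finprod G (\<lambda>u. s (x - of_nat c *s u)) Orb"
  unfolding sig_def using finprod_LS_apply[OF Orb_finite sig_fun] by (simp add: shift_def)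

lemma sig_fix: assumes s: "s \<in> carrier LS" and fx: "psi z s = s"
  shows "psi z (sig c s) = sig c s"
proof -
  interpret L: comm_group LS by (rule lamp_comm_group)
  have "psi z (sig c s) = finprod LS (\<lambda>u. psi z (shift (of_nat c *s u) s)) Orb"
    unfolding sig_def by (rule psi_finprod[OF Orb_finite sig_fun[OF s]])
  also have "\<dots> = finprod LS (\<lambda>u. shift (of_nat c *s phib u) s) Orb"
    using psi_shift[OF s] fx phib_smult by (simp add: psi_shift)
  also have "\<dots> = finprod LS (\<lambda>v. shift (of_nat c *s v) s) (phib ` Orb)"
  proof (rule L.finprod_reindex[symmetric])
    show "(\<lambda>v. shift (of_nat c *s v) s) \<in> phib ` Orb \<rightarrow> carrier LS" using shift_LS[OF s] by blast
    show "inj_on phib Orb" using phib_inj by (simp add: inj_on_def inj_def)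
  qed
  also have "\<dots> = sig c s" unfolding phib_Orb sig_def ..
  finally show ?thesis .
qed

lemma sig_supp: assumes s: "s \<in> carrier LS" and D: "\<forall>y \<in> supp G s. nrm y \<le> D"
  and B: "\<forall>u \<in> Orb. nrm u \<le> B" and x: "sig c s x \<noteq> \<one>"
  shows "nrm x \<le> int c * B + D"
proof -
  have "\<exists>u \<in> Orb. s (x - of_nat c *s u) \<noteq> \<one>"
  proof (rule ccontr)
    assume "\<not> ?thesis"
    then have "finprod G (\<lambda>u. s (x - of_nat c *s u)) Orb = \<one>" by (intro finprod_one_eqI) blast
    then show False using x sig_apply[OF s] by simp
  qed
  then obtain u where u: "u \<in> Orb" "s (x - of_nat c *s u) \<noteq> \<one>" by blast
  have "nrm (x - of_nat c *s u) \<le> D" using D u by (simp add: supp_def)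
  moreover have "nrm x \<le> nrm (x - of_nat c *s u) + nrm (of_nat c *s u)"
    using nrm_add[of "x - of_nat c *s u" "of_nat c *s u"] by simp
  moreover have "nrm (of_nat c *s u) \<le> int c * B" using B u by (simp add: nrm_smult mult_left_mono)
  ultimately show ?thesis by linarith
qed

lemma sig_peak: assumes s: "s \<in> carrier LS" and D: "\<forall>y \<in> supp G s. nrm y \<le> D"
  and x0: "x0 \<in> supp G s" and us: "us \<in> Orb" and c: "2 * D + 1 \<le> int c"
  shows "sig c s (of_nat c *s us + x0) = s x0"
proof -
  have other: "s (of_nat c *s us + x0 - of_nat c *s u) = \<one>" if u: "u \<in> Orb" "u \<noteq> us" for u
  proof -
    have eq: "of_nat c *s us + x0 - of_nat c *s u = of_nat c *s (us - u) + x0"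
      by (simp add: vector_ssub_ldistrib algebra_simps)
    have "1 \<le> nrm (us - u)" using u by (intro nrm_pos) simp
    moreover have "nrm (of_nat c *s (us - u)) = int c * nrm (us - u)" by (rule nrm_smult)
    ultimately have "int c \<le> nrm (of_nat c *s (us - u))"
      using mult_left_mono[of 1 "nrm (us - u)" "int c"] by simp
    moreover have "nrm (of_nat c *s (us - u)) - nrm x0 \<le> nrm (of_nat c *s (us - u) + x0)"
      by (rule nrm_diff_ge)
    moreover have "nrm x0 \<le> D" using D x0 by blast
    ultimately have gt: "nrm (of_nat c *s (us - u) + x0) > D" using c by linarith
    have "of_nat c *s (us - u) + x0 \<notin> supp G s" using D gt not_le by blast
    then have "s (of_nat c *s (us - u) + x0) = \<one>" unfolding supp_def by blast
    then show ?thesis unfolding eq .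
  qed
  have "sig c s (of_nat c *s us + x0) = finprod G (\<lambda>u. s (of_nat c *s us + x0 - of_nat c *s u)) Orb"
    by (rule sig_apply[OF s])
  also have "\<dots> = finprod G (\<lambda>u. if us = u then s x0 else \<one>) Orb"
    by (rule finprod_cong') (use other s in \<open>auto simp: LS_val\<close>)
  also have "\<dots> = s x0"
    by (rule finprod_singleton[OF us Orb_finite]) (use s in \<open>auto simp: LS_val\<close>)
  finally show ?thesis .
qed

end


context mtR begin

lemma no_fix_real: assumes s: "s \<in> carrier LS" and fx: "psi z s = s"
  shows "s = (\<lambda>x. \<one>)"
proof (rule ccontr)
  assume ne: "s \<noteq> (\<lambda>x. \<one>)"
  then obtain x0 where x0: "x0 \<in> supp G s" by (auto simp: supp_def)
  have finS: "finite (supp G s)" using s by (simp add: lamp_carrier)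
  define D where "D = Max (nrm ` supp G s)"
  have Dp: "\<forall>y \<in> supp G s. nrm y \<le> D" unfolding D_def using finS by simp
  have D0: "0 \<le> D" using Dp x0 nrm_nonneg[of x0] by force
  define B where "B = Max (nrm ` Orb)"
  have "B \<in> nrm ` Orb" unfolding B_def using Orb_finite Orb_ne by simp
  then obtain us where us: "us \<in> Orb" "nrm us = B" by auto
  have Bp: "\<forall>u \<in> Orb. nrm u \<le> B" unfolding B_def using Orb_finite by simp
  have B1: "1 \<le> B" using us Orb_nz nrm_pos[of us] by auto
  define K where "K = nat (2 * D + 1)"
  have K: "int K = 2 * D + 1" using D0 by (simp add: K_def)
  define R where "R = card (reid_classes WR phi)"
  define r where "r = Suc R"
  define cc where "cc i = K * Suc i" for i
  define L where "L = nat (int (cc r) * B + D)"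
  define m where "m = 2 * L + 1"
  define sg where "sg i = sig (cc i) s" for i
  define p where "p i = of_nat (cc i) *s us + x0" for i
  have sgL: "sg i \<in> carrier LS" for i unfolding sg_def by (rule sig_carrier[OF s])
  have sgfix: "psi z (sg i) = sg i" for i unfolding sg_def by (rule sig_fix[OF s fx])
  have cc_mono: "cc j \<le> cc i" if "j \<le> i" for i j using that by (simp add: cc_def)
  have sgsupp: "nrm x \<le> int (cc i) * B + D" if "sg i x \<noteq> \<one>" for i x
    using sig_supp[OF s Dp Bp] that unfolding sg_def by blast
  have sgbox: "supp G (sg i) \<subseteq> {x. nrm x \<le> int L}" if "i \<le> r" for i
  proof
    fix x assume "x \<in> supp G (sg i)"
    then have "nrm x \<le> int (cc i) * B + D" using sgsupp by (simp add: supp_def)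
    also have "\<dots> \<le> int (cc r) * B + D" using cc_mono[OF that] B1 by (simp add: mult_right_mono)
    also have "\<dots> = int L" using D0 B1 by (simp add: L_def)
    finally show "x \<in> {x. nrm x \<le> int L}" by simp
  qed
  have ccK: "2 * D + 1 \<le> int (cc i)" for i using K by (simp add: cc_def)
  have peak: "sg i (p i) = s x0" for i
    unfolding sg_def p_def by (rule sig_peak[OF s Dp x0 us(1) ccK])
  have peak_ne: "sg i (p i) \<noteq> \<one>" for i using peak x0 by (simp add: supp_def)
  have pnrm: "int (cc i) * B - D \<le> nrm (p i)" for i
  proof -
    have "nrm (of_nat (cc i) *s us) - nrm x0 \<le> nrm (p i)" unfolding p_def by (rule nrm_diff_ge)
    moreover have "nrm (of_nat (cc i) *s us) = int (cc i) * B" using us by (simp add: nrm_smult)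
    moreover have "nrm x0 \<le> D" using Dp x0 by blast
    ultimately show ?thesis by linarith
  qed
  have low: "sg j (p i) = \<one>" if ji: "j < i" for i j
  proof (rule ccontr)
    assume "sg j (p i) \<noteq> \<one>"
    then have h1: "nrm (p i) \<le> int (cc j) * B + D" by (rule sgsupp)
    have "cc j + K = K * Suc (Suc j)" by (simp add: cc_def)
    also have "\<dots> \<le> K * Suc i" using ji by (intro mult_le_mono2) simp
    finally have h2: "cc j + K \<le> cc i" by (simp add: cc_def)
    then have h3: "int (cc j) + int K \<le> int (cc i)" by linarith
    have h4: "(int (cc j) + int K) * B \<le> int (cc i) * B"
      using h3 B1 by (intro mult_right_mono) simp_all
    have h5: "int K \<le> int K * B" using B1 mult_left_mono[of 1 B "int K"] by simp
    have h6: "(int (cc j) + int K) * B = int (cc j) * B + int K * B" by (simp add: algebra_simps)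
    show False using h1 h4 h5 h6 pnrm[of i] K by linarith
  qed
  have mpos: "m > 0" by (simp add: m_def)
  have pbox: "nrm (p i) \<le> int L" if "i \<le> r" for i
    using sgbox[OF that] peak_ne[of i] by (auto simp: supp_def)
  have Pmeq: "Pm m (sg i) x = sg i x" if "i \<le> r" "nrm x \<le> int L" for i x
    unfolding m_def by (rule Pm_box[OF sgL sgbox[OF that(1)] that(2)])
  have inj: "inj_on (\<lambda>i. Pm m (sg i)) {..<r}"
  proof -
    have ne: "Pm m (sg i) \<noteq> Pm m (sg j)" if "j < i" "i < r" for i j
    proof
      assume eq: "Pm m (sg i) = Pm m (sg j)"
      have "Pm m (sg i) (p i) = sg i (p i)" using that pbox by (intro Pmeq) auto
      moreover have "Pm m (sg j) (p i) = sg j (p i)" using that pbox by (intro Pmeq) auto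
      ultimately show False using eq peak_ne[of i] low[OF that(1)] by simp
    qed
    show ?thesis
    proof (rule inj_onI)
      fix i j assume "i \<in> {..<r}" "j \<in> {..<r}" "Pm m (sg i) = Pm m (sg j)"
      then show "i = j" using ne by (metis lessThan_iff linorder_neqE_nat)
    qed
  qed
  let ?K = "{f \<in> Per m. Em z m f = (\<lambda>x. \<one>)}"
  have inK: "Pm m (sg i) \<in> ?K" for i
  proof -
    have P: "Pm m (sg i) \<in> Per m" by (rule Pm_carrier[OF sgL])
    have "psiM z m (Pm m (sg i)) = Pm m (sg i)" using Pm_psi[OF mpos sgL, of z i] sgfix by simp
    then have "Em z m (Pm m (sg i)) = (\<lambda>x. \<one>)"
      using P by (simp add: Em_def mulf_def invf_def Per_val)
    then show ?thesis using P by simp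
  qed
  have "r = card ((\<lambda>i. Pm m (sg i)) ` {..<r})" using inj by (simp add: card_image)
  also have "\<dots> \<le> card ?K"
    by (rule card_mono) (use Per_finite[OF finG mpos] inK in auto)
  also have "\<dots> \<le> R" unfolding R_def by (rule ker_bound[OF mpos])
  finally show False by (simp add: r_def)
qed

end


context wr begin
lemma cancel1: "x \<in> carrier G \<Longrightarrow> y \<in> carrier G \<Longrightarrow> x \<otimes> (y \<otimes> inv x) = y"
  by (simp add: m_lcomm[of x y])
lemma rearr: "a \<in> carrier G \<Longrightarrow> b \<in> carrier G \<Longrightarrow> c \<in> carrier G \<Longrightarrow> a \<otimes> b \<otimes> c = b \<otimes> (a \<otimes> c)"
  by (simp add: m_ac)
end

context mt begin
lemma twist_comp: assumes a: "a \<in> carrier WR" and b: "b \<in> carrier WR" and g: "g \<in> carrier WR"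
  shows "a \<otimes>\<^bsub>WR\<^esub> (b \<otimes>\<^bsub>WR\<^esub> g \<otimes>\<^bsub>WR\<^esub> phi (inv\<^bsub>WR\<^esub> b)) \<otimes>\<^bsub>WR\<^esub> phi (inv\<^bsub>WR\<^esub> a)
       = (a \<otimes>\<^bsub>WR\<^esub> b) \<otimes>\<^bsub>WR\<^esub> g \<otimes>\<^bsub>WR\<^esub> phi (inv\<^bsub>WR\<^esub> (a \<otimes>\<^bsub>WR\<^esub> b))"
proof -
  interpret W: group WR by (rule W_group)
  have "inv\<^bsub>WR\<^esub> (a \<otimes>\<^bsub>WR\<^esub> b) = inv\<^bsub>WR\<^esub> b \<otimes>\<^bsub>WR\<^esub> inv\<^bsub>WR\<^esub> a"
    using a b by (simp add: W.inv_mult_group)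
  then have "phi (inv\<^bsub>WR\<^esub> (a \<otimes>\<^bsub>WR\<^esub> b)) = phi (inv\<^bsub>WR\<^esub> b) \<otimes>\<^bsub>WR\<^esub> phi (inv\<^bsub>WR\<^esub> a)"
    using a b phi_mult by simp
  then show ?thesis using a b g phi_carrier by (simp add: W.m_assoc)
qed
end

context mtR begin

lemma no_fix: "s \<in> carrier LS \<Longrightarrow> psi z s = s \<Longrightarrow> s = (\<lambda>x. \<one>)"
  by (rule no_fix_real)

lemma Th_surj': "u \<in> carrier LS \<Longrightarrow> \<exists>a \<in> carrier LS. Th z a = u"
  using Th_surj no_fix by blast

lemma part1: assumes g: "g \<in> carrier WR"
  shows "reid_class WR phi g = {h \<in> carrier WR. proj h \<in> reid_class (Zk :: (int^'n) monoid) phib (proj g)}"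
proof
  show "reid_class WR phi g \<subseteq> {h \<in> carrier WR. proj h \<in> reid_class Zk phib (proj g)}"
  proof
    fix h assume h: "h \<in> reid_class WR phi g"
    then have "proj h \<in> reid_class (Zk :: (int^'n) monoid) phib (proj g)"
      using proj_reid_class[OF g] by blast
    moreover have "h \<in> carrier WR" using h g
      by (auto simp: reid_class_def intro!: mult_closed_W phi_carrier inv_closed_W)
    ultimately show "h \<in> {h \<in> carrier WR. proj h \<in> reid_class Zk phib (proj g)}" by simp
  qed
next
  show "{h \<in> carrier WR. proj h \<in> reid_class Zk phib (proj g)} \<subseteq> reid_class WR phi g"
  proof
    fix h assume "h \<in> {h \<in> carrier WR. proj h \<in> reid_class (Zk :: (int^'n) monoid) phib (proj g)}"
    then have h: "h \<in> carrier WR" and hz: "proj h \<in> reid_class (Zk :: (int^'n) monoid) phib (proj g)" by auto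
    obtain s' z' where hh: "h = (s', z')" by (cases h)
    have s'L: "s' \<in> carrier LS" using h hh by (simp add: wreath_carrier)
    obtain w where z': "z' = w + snd g + phib (- w)" using hz hh by (auto simp: reid_class_Zk proj_def)
    let ?h1 = "((\<lambda>x. \<one>), w)"
    let ?g1 = "?h1 \<otimes>\<^bsub>WR\<^esub> g \<otimes>\<^bsub>WR\<^esub> phi (inv\<^bsub>WR\<^esub> ?h1)"
    have g1W: "?g1 \<in> carrier WR" using unit_W[of w] g by (intro mult_closed_W phi_carrier inv_closed_W)
    have "snd ?g1 = z'"
      using z' unit_W[of w] g by (simp add: snd_W_mult snd_phi' inv_closed_W W_inv_snd)
    then obtain s1 where g1: "?g1 = (s1, z')" by (metis prod.collapse)
    have s1L: "s1 \<in> carrier LS" using g1W g1 by (simp add: wreath_carrier)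
    have dL: "(\<lambda>x. s' x \<otimes> inv (s1 x)) \<in> carrier LS"
      using LS_mult_carrier[OF s'L LS_inv_carrier[OF s1L]] .
    obtain u where uL: "u \<in> carrier LS" and uT: "Th z' u = (\<lambda>x. s' x \<otimes> inv (s1 x))"
      using Th_surj'[OF dL] by blast
    let ?h2 = "(u, 0 :: int^'n)"
    have h2W: "?h2 \<in> carrier WR" using uL by (simp add: wreath_carrier)
    have invh2: "inv\<^bsub>WR\<^esub> ?h2 = ((\<lambda>x. inv (u x)), 0)" using wreath_inv[OF h2W] by simp
    have phiinv: "phi (inv\<^bsub>WR\<^esub> ?h2) = ((\<lambda>x. inv (phiS u x)), 0)"
      unfolding invh2 using phi_Sigma[OF LS_inv_carrier[OF uL]] phiS_inv[OF uL] by simp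
    have "?h2 \<otimes>\<^bsub>WR\<^esub> ?g1 \<otimes>\<^bsub>WR\<^esub> phi (inv\<^bsub>WR\<^esub> ?h2) = (s', z')"
    proof -
      have "?h2 \<otimes>\<^bsub>WR\<^esub> ?g1 \<otimes>\<^bsub>WR\<^esub> phi (inv\<^bsub>WR\<^esub> ?h2)
          = ((\<lambda>x. u x \<otimes> s1 x \<otimes> inv (phiS u (x - z'))), z')"
        unfolding g1 phiinv by simp
      also have "\<dots> = (s', z')"
      proof -
        have "u x \<otimes> s1 x \<otimes> inv (phiS u (x - z')) = s' x" for x
        proof -
          have c: "u x \<in> carrier G" "s1 x \<in> carrier G" "phiS u (x - z') \<in> carrier G" "s' x \<in> carrier G"
            using uL s1L phiS_carrier[OF uL] s'L by (auto simp: lamp_carrier)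
          have e: "u x \<otimes> inv (phiS u (x - z')) = s' x \<otimes> inv (s1 x)"
            using uT by (simp add: Th_def psi_def fun_eq_iff)
          have "u x \<otimes> s1 x \<otimes> inv (phiS u (x - z')) = s1 x \<otimes> (u x \<otimes> inv (phiS u (x - z')))"
            using c by (simp add: rearr)
          also have "\<dots> = s' x" unfolding e using c by (simp add: cancel1)
          finally show ?thesis .
        qed
        then show ?thesis by simp
      qed
      finally show ?thesis .
    qed
    then have "h = (?h2 \<otimes>\<^bsub>WR\<^esub> ?h1) \<otimes>\<^bsub>WR\<^esub> g \<otimes>\<^bsub>WR\<^esub> phi (inv\<^bsub>WR\<^esub> (?h2 \<otimes>\<^bsub>WR\<^esub> ?h1))"
      using twist_comp[OF h2W unit_W[of w] g] hh by simp
    moreover have "?h2 \<otimes>\<^bsub>WR\<^esub> ?h1 \<in> carrier WR" using h2W unit_W by (rule mult_closed_W)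
    ultimately show "h \<in> reid_class WR phi g" unfolding reid_class_def by blast
  qed
qed

lemma part2: "reid_number WR phi = reid_number (Zk :: (int^'n) monoid) phib"
proof -
  define pre where "pre c = {h \<in> carrier WR. proj h \<in> c}" for c
  have "reid_classes WR phi = (\<lambda>g. pre (reid_class (Zk :: (int^'n) monoid) phib (proj g))) ` carrier WR"
    unfolding reid_classes_def pre_def using part1 by (rule image_cong[OF refl])
  also have "\<dots> = pre ` (reid_class (Zk :: (int^'n) monoid) phib ` (proj ` carrier WR))"
    by (simp only: image_image)
  also have "\<dots> = pre ` reid_classes (Zk :: (int^'n) monoid) phib"
    unfolding proj_surj reid_classes_def by simp
  finally have eq: "reid_classes WR phi = pre ` reid_classes (Zk :: (int^'n) monoid) phib" .
  have inj: "inj pre"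
  proof (rule injI)
    fix c d assume "pre c = pre d"
    moreover have "proj ` pre c = c" for c
    proof
      show "proj ` pre c \<subseteq> c" by (auto simp: pre_def)
      show "c \<subseteq> proj ` pre c"
      proof
        fix z assume "z \<in> c"
        then have "((\<lambda>x. \<one>), z) \<in> pre c" using unit_W by (simp add: pre_def proj_def)
        then show "z \<in> proj ` pre c" by (force simp: proj_def)
      qed
    qed
    ultimately show "c = d" by metis
  qed
  have "finite (reid_classes WR phi) \<longleftrightarrow> finite (reid_classes (Zk :: (int^'n) monoid) phib)"
    unfolding eq using inj by (simp add: finite_image_iff inj_on_subset)
  moreover have "card (reid_classes WR phi) = card (reid_classes (Zk :: (int^'n) monoid) phib)"
    unfolding eq using inj by (simp add: card_image inj_on_subset)
  ultimately show ?thesis by (simp add: reid_number_def)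
qed

lemma part3: "reid_number LS (psi z) = 1"
proof -
  interpret L: comm_group LS by (rule lamp_comm_group)
  have cls: "reid_class LS (psi z) x = carrier LS" if x: "x \<in> carrier LS" for x
  proof
    show "reid_class LS (psi z) x \<subseteq> carrier LS"
    proof
      fix e assume "e \<in> reid_class LS (psi z) x"
      then obtain g where g: "g \<in> carrier LS" and e: "e = g \<otimes>\<^bsub>LS\<^esub> x \<otimes>\<^bsub>LS\<^esub> psi z (inv\<^bsub>LS\<^esub> g)"
        unfolding reid_class_def by blast
      show "e \<in> carrier LS" unfolding e
        by (rule L.m_closed[OF L.m_closed[OF g x] psi_carrier[OF L.inv_closed[OF g]]])
    qed
    show "carrier LS \<subseteq> reid_class LS (psi z) x"
    proof
      fix y assume y: "y \<in> carrier LS"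
      have dL: "(\<lambda>t. y t \<otimes> inv (x t)) \<in> carrier LS"
        using LS_mult_carrier[OF y LS_inv_carrier[OF x]] .
      obtain u where uL: "u \<in> carrier LS" and uT: "Th z u = (\<lambda>t. y t \<otimes> inv (x t))"
        using Th_surj'[OF dL] by blast
      have "u \<otimes>\<^bsub>LS\<^esub> x \<otimes>\<^bsub>LS\<^esub> psi z (inv\<^bsub>LS\<^esub> u) = (\<lambda>t. u t \<otimes> x t \<otimes> inv (psi z u t))"
        using lamp_inv[OF uL] psi_inv[OF uL] by simp
      also have "\<dots> = y"
      proof
        fix t
        have c: "u t \<in> carrier G" "x t \<in> carrier G" "psi z u t \<in> carrier G" "y t \<in> carrier G"
          using uL x psi_carrier[OF uL] y by (auto simp: lamp_carrier)
        have e: "u t \<otimes> inv (psi z u t) = y t \<otimes> inv (x t)"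
          using uT by (simp add: Th_def fun_eq_iff)
        have "u t \<otimes> x t \<otimes> inv (psi z u t) = x t \<otimes> (u t \<otimes> inv (psi z u t))"
          using c by (simp add: rearr)
        also have "\<dots> = y t" unfolding e using c by (simp add: cancel1)
        finally show "u t \<otimes> x t \<otimes> inv (psi z u t) = y t" .
      qed
      finally show "y \<in> reid_class LS (psi z) x" unfolding reid_class_def using uL by blast
    qed
  qed
  have "reid_classes LS (psi z) = {carrier LS}"
    unfolding reid_classes_def using cls L.one_closed by blast
  then show ?thesis by (simp add: reid_number_def one_enat_def)
qed

end


theorem mainTheorem6:
  fixes G :: "('g, 'b) monoid_scheme"
    and phi :: "(((int ^ 'n::finite) \<Rightarrow> 'g) \<times> (int ^ 'n)) \<Rightarrow> (((int ^ 'n) \<Rightarrow> 'g) \<times> (int ^ 'n))"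
  assumes "comm_group G"
    and "finite (carrier G)"
    and "phi \<in> iso (wreath G) (wreath G)"
    and "\<exists>n>0. \<forall>g \<in> carrier (wreath G). (phi ^^ n) g = g"
    and "reid_number (wreath G) phi < \<infinity>"
  shows "(\<forall>g \<in> carrier (wreath G).
            reid_class (wreath G) phi g
              = {h \<in> carrier (wreath G). proj h \<in> reid_class (Zk :: (int ^ 'n) monoid) (induced G phi) (proj g)})
         \<and> reid_number (wreath G) phi = reid_number (Zk :: (int ^ 'n) monoid) (induced G phi)
         \<and> (\<forall>z :: int ^ 'n. reid_number (lamp_sum G :: ((int ^ 'n) \<Rightarrow> 'g) monoid)
                                 (\<lambda>s. shift z (restr_Sigma phi s)) = 1)"
proof -
  obtain n where n: "n > 0" "\<forall>g \<in> carrier (wreath G). (phi ^^ n) g = g" using assms(4) by blast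
  have fin: "finite (reid_classes (wreath G) phi)"
    using assms(5) by (simp add: reid_number_def split: if_splits)
  interpret mtR G "TYPE('n)" phi n
    unfolding mtR_def mtR_axioms_def mt_def mt_axioms_def wr_def using assms n fin by auto
  have e3: "(\<lambda>s. shift z (restr_Sigma phi s)) = psi z" for z
    by (rule ext) (simp add: restr_eq psi_def)
  show ?thesis using part1 part2 part3 unfolding induced_eq e3 by blast
qed


end
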